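(* Let $g$ be a bounded generalized spatial sign, $1\le m<d$, and fix a dataset $S=(x_1,\dots,x_n)\in(\mathbb{R}^d)^n$. Then \[ \mathrm{bp}(\mathcal{V}_m^g;S)\ge\frac{\hat\phi_{g,m}-\hat\phi_{g,m+1}}{8\|g\|_\infty^2}, \] where $\hat\phi_{g,i}$ is the $i$-th largest eigenvalue of $\widehat K_g(S)$.
   Context: A bounded generalized spatial sign is $g(t)=\xi(\|t\|_2)t/\|t\|_2$ with $\xi:(0,\infty)\to(0,\infty)$ and $\|g\|_\infty:=\sup_t\|g(t)\|_2<\infty$. For a dataset $S=(x_1,\dots,x_n)$, $\widehat K_g(S)=\frac{2}{n(n-1)}\sum_{i<j}g((x_j-x_i)/\sqrt2)g((x_j-x_i)/\sqrt2)^\top$, and $\mathcal{V}_m^g(S)$ is the column space of the $d\times m$ matrix of orthonormal eigenvectors of $\widehat K_g(S)$ for its $m$ largest eigenvalues, an element of the Grassmannian $\mathrm{Gr}(d,m)$. For a map $\mathcal{V}:(\mathbb{R}^d)^n\to\mathrm{Gr}(d,m)$, the breakdown point at $S$ is \[ \mathrm{bp}(\mathcal{V};S)=\min_{1\le r\le n}\Big\{\frac rn:\sup_{S_{r/n}}\Theta(\mathcal{V}(S_{r/n}),\mathcal{V}(S))=\frac\pi2\Big\}, \] where the supremum is over all datasets $S_{r/n}=(x_1,\dots,x_{n-r},y_1,\dots,y_r)$ with arbitrary $y_1,\dots,y_r\in\mathbb{R}^d$, and $\Theta(\mathrm{col}(V_1),\mathrm{col}(V_2))=\arccos\varrho_m$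 is the largest principal angle, $\varrho_m$ being the smallest singular value of $V_1^\top V_2$ for orthonormal bases $V_1,V_2$. *)

theory Defs
  imports "Jordan_Normal_Form.Char_Poly" "HOL-Computational_Algebra.Polynomial"
begin

definition vnorm :: "real vec \<Rightarrow> real" where
  "vnorm v = sqrt (v \<bullet> v)"

text \<open>For the symmetric matrices considered here all eigenvalues are real and there are
 exactly dim many of them.\<close>
definition eigs_desc :: "real mat \<Rightarrow> real list" where
  "eigs_desc A = (let p = char_poly A in
     rev (sort (concat (map (\<lambda>x. replicate (order x p) x)
                          (sorted_list_of_set {x. poly p x = 0})))))"

definition eig_nth :: "real mat \<Rightarrow> nat \<Rightarrow> real" where
  "eig_nth A i = eigs_desc A ! (i - 1)"

definition top_eigvec_matrix :: "nat \<Rightarrow> real mat \<Rightarrow> real mat \<Rightarrow> bool" where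
  "top_eigvec_matrix m A V \<longleftrightarrow>
     V \<in> carrier_mat (dim_row A) m \<and>
     transpose_mat V * V = 1\<^sub>m m \<and>
     (\<forall>j<m. A *\<^sub>v col V j = eig_nth A (j + 1) \<cdot>\<^sub>v col V j)"

definition smallest_sv :: "real mat \<Rightarrow> real" where
  "smallest_sv M = sqrt (eig_nth (transpose_mat M * M) (dim_col M))"

text \<open>Largest principal angle between col(V1) and col(V2), V1, V2 orthonormal bases.\<close>
definition Theta :: "real mat \<Rightarrow> real mat \<Rightarrow> real" where
  "Theta V1 V2 = arccos (smallest_sv (transpose_mat V1 * V2))"

definition gss :: "(real \<Rightarrow> real) \<Rightarrow> real vec \<Rightarrow> real vec" where
  "gss xi t = (if vnorm t = 0 then 0\<^sub>v (dim_vec t) else (xi (vnorm t) / vnorm t) \<cdot>\<^sub>v t)"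

definition gss_sup_norm :: "nat \<Rightarrow> (real \<Rightarrow> real) \<Rightarrow> real" where
  "gss_sup_norm d xi = (SUP t\<in>carrier_vec d. vnorm (gss xi t))"

definition K_hat :: "nat \<Rightarrow> (real \<Rightarrow> real) \<Rightarrow> real vec list \<Rightarrow> real mat" where
  "K_hat d xi S = (let n = length S;
      u = (\<lambda>i j. gss xi ((1 / sqrt 2) \<cdot>\<^sub>v (S ! j - S ! i))) in
      mat d d (\<lambda>(a, b). 2 / (real n * (real n - 1)) *
        (\<Sum>i<n. \<Sum>j\<in>{i<..<n}. u i j $ a * u i j $ b)))"

definition contaminated :: "nat \<Rightarrow> real vec list \<Rightarrow> nat \<Rightarrow> real vec list set" where
  "contaminated d S r = {take (length S - r) S @ ys | ys.
      length ys = r \<and> (\<forall>y\<in>set ys. y \<in> carrier_vec d)}"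

text \<open>Breakdown point of a subspace-valued map V (represented by orthonormal basis
 matrices) at S; if no r breaks down, the convention is bp = 1.\<close>
definition bp :: "nat \<Rightarrow> (real vec list \<Rightarrow> real mat) \<Rightarrow> real vec list \<Rightarrow> real" where
  "bp d V S = (let n = length S;
      R = {r \<in> {1..n}. (SUP S'\<in>contaminated d S r. Theta (V S') (V S)) = pi / 2} in
      if R = {} then 1 else real (Min R) / real n)"

end

theory Submission
  imports Defs "HOL-Combinatorics.List_Permutation"
begin

definition ON :: "nat \<Rightarrow> real vec list \<Rightarrow> bool" where
  "ON n ps \<longleftrightarrow> (\<forall>p\<in>set ps. p \<in> carrier_vec n) \<and>
     (\<forall>i<length ps. \<forall>j<length ps. ps ! i \<bullet> ps ! j = (if i = j then 1 else 0))"

lemma ON_carrier: "ON n ps \<Longrightarrow> i < length ps \<Longrightarrow> ps ! i \<in> carrier_vec n"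
  unfolding ON_def by auto

lemma ON_dot: "ON n ps \<Longrightarrow> i < length ps \<Longrightarrow> j < length ps \<Longrightarrow> ps ! i \<bullet> ps ! j = (if i = j then 1 else 0)"
  unfolding ON_def by auto

lemma self_dot_nonneg: fixes v :: "real vec" shows "0 \<le> v \<bullet> v"
  unfolding scalar_prod_def by (auto intro: sum_nonneg)

lemma self_dot_zero: fixes v :: "real vec" assumes "v \<in> carrier_vec n" "v \<bullet> v = 0"
  shows "v = 0\<^sub>v n"
proof -
  have "(\<Sum>i\<in>{0..<n}. v $ i * v $ i) = 0" using assms unfolding scalar_prod_def by auto
  then have "\<forall>i\<in>{0..<n}. v $ i * v $ i = 0"
    by (subst sum_nonneg_eq_0_iff[symmetric]) auto
  then show ?thesis using assms by (intro eq_vecI) auto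
qed

lemma self_dot_pos: fixes v :: "real vec" assumes "v \<in> carrier_vec n" "v \<noteq> 0\<^sub>v n"
  shows "v \<bullet> v > 0"
  using self_dot_nonneg[of v] self_dot_zero[OF assms(1)] assms(2) by fastforce

lemma mat_vec_dot: fixes A :: "real mat"
  assumes "A \<in> carrier_mat n m" "w \<in> carrier_vec n" "x \<in> carrier_vec m"
  shows "w \<bullet> (A *\<^sub>v x) = (\<Sum>j<m. (w \<bullet> col A j) * x $ j)"
proof -
  have "w \<bullet> (A *\<^sub>v x) = (\<Sum>i<n. w $ i * (\<Sum>j<m. A $$ (i, j) * x $ j))"
    using assms unfolding scalar_prod_def mult_mat_vec_def row_def
    by (auto simp: atLeast0LessThan intro!: sum.cong)
  also have "\<dots> = (\<Sum>j<m. (\<Sum>i<n. w $ i * A $$ (i, j)) * x $ j)"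
    by (simp add: sum_distrib_left sum_distrib_right mult.assoc sum.swap[of _ "{..<m}"])
  also have "\<dots> = (\<Sum>j<m. (w \<bullet> col A j) * x $ j)"
    using assms unfolding scalar_prod_def col_def
    by (auto simp: atLeast0LessThan intro!: sum.cong)
  finally show ?thesis .
qed

lemma mat_vec_index_dot: fixes A :: "real mat"
  assumes "A \<in> carrier_mat n m" "x \<in> carrier_vec m" "i < n"
  shows "(A *\<^sub>v x) $ i = row A i \<bullet> x"
  using assms by auto

lemma sym_swap: fixes A :: "real mat"
  assumes "A \<in> carrier_mat n n" "A\<^sup>T = A" "u \<in> carrier_vec n" "v \<in> carrier_vec n"
  shows "u \<bullet> (A *\<^sub>v v) = (A *\<^sub>v u) \<bullet> v"
  using transpose_vec_mult_scalar[OF assms(1,4,3)] assms(2) by simp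

lemma parseval: fixes ps :: "real vec list"
  assumes on: "ON n ps" and len: "length ps = n" and x: "x \<in> carrier_vec n" and y: "y \<in> carrier_vec n"
  shows "x \<bullet> y = (\<Sum>i<n. (ps ! i \<bullet> x) * (ps ! i \<bullet> y))"
proof -
  define P where "P = mat_of_rows n ps"
  have P: "P \<in> carrier_mat n n" unfolding P_def using len by auto
  have rowP: "\<And>i. i < n \<Longrightarrow> row P i = ps ! i"
    unfolding P_def using len on by (auto intro!: mat_of_rows_row ON_carrier)
  have "P * P\<^sup>T = 1\<^sub>m n"
  proof (rule eq_matI)
    fix i j assume ij: "i < dim_row (1\<^sub>m n)" "j < dim_col (1\<^sub>m n)"
    then have "(P * P\<^sup>T) $$ (i, j) = row P i \<bullet> col P\<^sup>T j" using P by auto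
    also have "\<dots> = ps ! i \<bullet> ps ! j" using ij P rowP by (simp add: row_transpose[symmetric])
    also have "\<dots> = 1\<^sub>m n $$ (i, j)" using ij on len by (auto simp: ON_dot)
    finally show "(P * P\<^sup>T) $$ (i, j) = 1\<^sub>m n $$ (i, j)" .
  qed (use P in auto)
  then have PtP: "P\<^sup>T * P = 1\<^sub>m n" using mat_mult_left_right_inverse[OF P] P by auto
  have "x \<bullet> y = x \<bullet> ((P\<^sup>T * P) *\<^sub>v y)" using PtP y by auto
  also have "\<dots> = x \<bullet> (P\<^sup>T *\<^sub>v (P *\<^sub>v y))" using P y by (simp add: assoc_mult_mat_vec[of _ n n])
  also have "\<dots> = (P *\<^sub>v y) \<bullet> (P *\<^sub>v x)"
    using transpose_vec_mult_scalar[of P n n x "P *\<^sub>v y"] P x y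
      comm_scalar_prod[of x n "P\<^sup>T *\<^sub>v (P *\<^sub>v y)"] by auto
  also have "\<dots> = (\<Sum>i<n. (P *\<^sub>v y) $ i * (P *\<^sub>v x) $ i)"
    using P unfolding scalar_prod_def by (auto simp: atLeast0LessThan)
  also have "\<dots> = (\<Sum>i<n. (ps ! i \<bullet> x) * (ps ! i \<bullet> y))"
    using P rowP x y by (auto intro!: sum.cong)
  finally show ?thesis .
qed

lemma quad_form: fixes A :: "real mat"
  assumes on: "ON n ps" and len: "length ps = n" and A: "A \<in> carrier_mat n n" "A\<^sup>T = A"
    and ev: "\<And>i. i < n \<Longrightarrow> A *\<^sub>v ps ! i = es ! i \<cdot>\<^sub>v ps ! i" and x: "x \<in> carrier_vec n"
  shows "x \<bullet> (A *\<^sub>v x) = (\<Sum>i<n. es ! i * (ps ! i \<bullet> x)^2)"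
proof -
  have "x \<bullet> (A *\<^sub>v x) = (\<Sum>i<n. (ps ! i \<bullet> x) * (ps ! i \<bullet> (A *\<^sub>v x)))"
    using parseval[OF on len x] A x by auto
  also have "\<dots> = (\<Sum>i<n. es ! i * (ps ! i \<bullet> x)^2)"
  proof (rule sum.cong)
    fix i assume "i \<in> {..<n}"
    then have i: "i < n" by auto
    have pi: "ps ! i \<in> carrier_vec n" using on len i by (auto intro: ON_carrier)
    have "ps ! i \<bullet> (A *\<^sub>v x) = (A *\<^sub>v ps ! i) \<bullet> x" using sym_swap[OF A pi x] .
    also have "\<dots> = es ! i * (ps ! i \<bullet> x)" using ev[OF i] pi x by simp
    finally show "(ps ! i \<bullet> x) * (ps ! i \<bullet> (A *\<^sub>v x)) = es ! i * (ps ! i \<bullet> x)^2"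
      by (simp add: power2_eq_square)
  qed simp
  finally show ?thesis .
qed

lemma norm_parseval: assumes "ON n ps" "length ps = n" "x \<in> carrier_vec n"
  shows "x \<bullet> x = (\<Sum>i<n. (ps ! i \<bullet> x)^2)"
  using parseval[OF assms assms(3)] by (simp add: power2_eq_square)

lemma ON_ext: assumes on: "ON n ps" and k: "length ps < n"
  shows "\<exists>q. q \<in> carrier_vec n \<and> q \<bullet> q = 1 \<and> (\<forall>i<length ps. ps ! i \<bullet> q = 0)"
proof -
  define k where "k = length ps"
  define B where "B = mat n n (\<lambda>(i,j). if i < k then ps ! i $ j else (0::real))"
  have B: "B \<in> carrier_mat n n" unfolding B_def by auto
  have "B\<^sup>T *\<^sub>v unit_vec n (n - 1) = 0\<^sub>v n"
  proof (rule eq_vecI)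
    fix i assume "i < dim_vec (0\<^sub>v n :: real vec)"
    then have i: "i < n" by auto
    have "(B\<^sup>T *\<^sub>v unit_vec n (n - 1)) $ i = row B\<^sup>T i \<bullet> unit_vec n (n - 1)" using i B by auto
    also have "\<dots> = (row B\<^sup>T i) $ (n - 1)" using i B k by (auto simp: scalar_prod_right_unit)
    also have "\<dots> = 0" using i B k unfolding B_def k_def by auto
    finally show "(B\<^sup>T *\<^sub>v unit_vec n (n - 1)) $ i = 0\<^sub>v n $ i" using i by auto
  qed (use B in auto)
  moreover have "unit_vec n (n - 1) \<noteq> (0\<^sub>v n :: real vec)"
  proof
    assume "unit_vec n (n - 1) = (0\<^sub>v n :: real vec)"
    then have "unit_vec n (n - 1) $ (n - 1) = (0\<^sub>v n :: real vec) $ (n - 1)" by simp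
    then show False using k by auto
  qed
  moreover have BT: "B\<^sup>T \<in> carrier_mat n n" using B by auto
  ultimately have "det B\<^sup>T = 0" using det_0_iff_vec_prod_zero[OF BT] unit_vec_carrier[of n "n - 1"]
    by blast
  then have "det B = 0" using det_transpose[OF B] by simp
  then obtain v where v: "v \<in> carrier_vec n" "v \<noteq> 0\<^sub>v n" "B *\<^sub>v v = 0\<^sub>v n"
    using det_0_iff_vec_prod_zero[OF B] by auto
  have orth: "ps ! i \<bullet> v = 0" if i: "i < k" for i
  proof -
    have pi: "ps ! i \<in> carrier_vec n" using on i k_def by (auto intro: ON_carrier)
    have "row B i = ps ! i" using i k pi unfolding B_def k_def by (auto intro!: eq_vecI)
    then have "ps ! i \<bullet> v = (B *\<^sub>v v) $ i" using i k B k_def by auto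
    then show ?thesis using v i k k_def by auto
  qed
  have vv: "v \<bullet> v > 0" using self_dot_pos[OF v(1,2)] .
  define q where "q = (1 / sqrt (v \<bullet> v)) \<cdot>\<^sub>v v"
  have q: "q \<in> carrier_vec n" unfolding q_def using v by auto
  have "q \<bullet> q = (1 / sqrt (v \<bullet> v)) * ((1 / sqrt (v \<bullet> v)) * (v \<bullet> v))"
    unfolding q_def using v by (simp add: scalar_prod_smult_left scalar_prod_smult_right)
  also have "\<dots> = 1" using vv by (simp add: field_simps)
  finally have qq: "q \<bullet> q = 1" .
  have "ps ! i \<bullet> q = 0" if i: "i < length ps" for i
    using orth[of i] i v ON_carrier[OF on i] unfolding q_def k_def by (simp add: scalar_prod_smult_right)
  then show ?thesis using q qq by blast
qed

lemma ON_append: assumes on: "ON n ps" and q: "q \<in> carrier_vec n" "q \<bullet> q = 1"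
  and orth: "\<forall>i<length ps. ps ! i \<bullet> q = 0"
  shows "ON n (ps @ [q])"
proof -
  have "(ps @ [q]) ! i \<bullet> (ps @ [q]) ! j = (if i = j then 1 else 0)"
    if "i < length (ps @ [q])" "j < length (ps @ [q])" for i j
  proof -
    have c: "\<And>i. i < length ps \<Longrightarrow> ps ! i \<in> carrier_vec n" using on by (auto intro: ON_carrier)
    have ci: "i < length ps \<or> i = length ps" and cj: "j < length ps \<or> j = length ps"
      using that by auto
    consider "i < length ps" "j < length ps" | "i < length ps" "j = length ps"
      | "i = length ps" "j < length ps" | "i = length ps" "j = length ps"
      using ci cj by blast
    then show ?thesis
    proof cases
      case 1 then show ?thesis using on by (simp add: nth_append ON_dot)
    next
      case 2 then show ?thesis using orth by (simp add: nth_append)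
    next
      case 3 then show ?thesis using orth c[of j] q comm_scalar_prod[of q n "ps ! j"]
        by (simp add: nth_append)
    next
      case 4 then show ?thesis using q by (simp add: nth_append)
    qed
  qed
  moreover have "\<forall>p\<in>set (ps @ [q]). p \<in> carrier_vec n" using on q unfolding ON_def by auto
  ultimately show ?thesis unfolding ON_def by blast
qed

lemma ON_full: assumes "ON n ps" "length ps \<le> n"
  shows "\<exists>ws. ON n (ps @ ws) \<and> length (ps @ ws) = n"
  using assms
proof (induction "n - length ps" arbitrary: ps)
  case 0 then show ?case by (intro exI[of _ "[]"]) auto
next
  case (Suc x)
  then have lt: "length ps < n" by auto
  from ON_ext[OF Suc(3) lt] obtain q where q: "q \<in> carrier_vec n" "q \<bullet> q = 1"
    "\<forall>i<length ps. ps ! i \<bullet> q = 0" by auto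
  have on': "ON n (ps @ [q])" using ON_append[OF Suc(3) q] .
  have "\<exists>ws. ON n ((ps @ [q]) @ ws) \<and> length ((ps @ [q]) @ ws) = n"
    using Suc(1)[of "ps @ [q]"] Suc(2) lt on' by auto
  then obtain ws where
    "ON n (ps @ [q] @ ws) \<and> length (ps @ [q] @ ws) = n" by auto
  then show ?case by (intro exI[of _ "q # ws"]) auto
qed

lemma real_eig: fixes C :: "real mat"
  assumes C: "C \<in> carrier_mat m m" and sym: "C\<^sup>T = C" and m: "0 < m"
  shows "\<exists>\<mu> v. v \<in> carrier_vec m \<and> v \<noteq> 0\<^sub>v m \<and> C *\<^sub>v v = \<mu> \<cdot>\<^sub>v v"
proof -
  define Cc :: "complex mat" where "Cc = of_real_hom.mat_hom C"
  have Cc: "Cc \<in> carrier_mat m m" unfolding Cc_def using C by auto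
  have cp: "char_poly Cc = map_poly of_real (char_poly C)"
    unfolding Cc_def by (rule of_real_hom.char_poly_hom[OF C])
  from char_poly_factorized[OF Cc] obtain as where
    as: "char_poly Cc = (\<Prod>a\<leftarrow>as. [:- a, 1:])" "length as = m" by auto
  define la where "la = as ! 0"
  have "la \<in> set as" unfolding la_def using as m by auto
  then have "poly (char_poly Cc) la = 0" using as by (simp add: linear_poly_root)
  then have "eigenvalue Cc la" using eigenvalue_root_char_poly[OF Cc] by simp
  then obtain v where v: "v \<in> carrier_vec m" "v \<noteq> 0\<^sub>v m" "Cc *\<^sub>v v = la \<cdot>\<^sub>v v"
    unfolding eigenvalue_def eigenvector_def using Cc by auto
  define s where "s = (\<Sum>i<m. cnj (v $ i) * (Cc *\<^sub>v v) $ i)"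
  define N where "N = (\<Sum>i<m. cnj (v $ i) * v $ i)"
  have s1: "s = la * N" unfolding s_def N_def using v
    by (auto simp: sum_distrib_left intro!: sum.cong)
  have Cij: "C $$ (j, i) = C $$ (i, j)" if "i < m" "j < m" for i j
  proof -
    have "C\<^sup>T $$ (i, j) = C $$ (j, i)" using that C by auto
    then show ?thesis using sym by simp
  qed
  have s2: "s = (\<Sum>i<m. \<Sum>j<m. cnj (v $ i) * of_real (C $$ (i, j)) * v $ j)"
    unfolding s_def using v(1) C Cc
    by (auto simp: Cc_def scalar_prod_def sum_distrib_left atLeast0LessThan mult.assoc intro!: sum.cong)
  have "cnj s = (\<Sum>i<m. \<Sum>j<m. v $ i * of_real (C $$ (i, j)) * cnj (v $ j))"
    unfolding s2 by simp
  also have "\<dots> = (\<Sum>j<m. \<Sum>i<m. v $ i * of_real (C $$ (i, j)) * cnj (v $ j))"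
    by (rule sum.swap)
  also have "\<dots> = s" unfolding s2
    by (auto intro!: sum.cong simp: Cij mult.commute mult.left_commute)
  finally have cs: "cnj s = s" .
  have Nr: "N = of_real (\<Sum>i<m. (cmod (v $ i))^2)"
    unfolding N_def of_real_sum by (intro sum.cong refl) (metis complex_norm_square mult.commute)
  have "\<exists>i<m. v $ i \<noteq> 0"
  proof (rule ccontr)
    assume "\<not> ?thesis"
    then have "v = 0\<^sub>v m" using v by (intro eq_vecI) auto
    then show False using v by simp
  qed
  then obtain i0 where i0: "i0 < m" "v $ i0 \<noteq> 0" by auto
  have "(\<Sum>i<m. (cmod (v $ i))^2) \<ge> (cmod (v $ i0))^2"
    using i0 by (intro member_le_sum) auto
  moreover have "(cmod (v $ i0))^2 > 0" using i0 by auto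
  ultimately have Npos: "(\<Sum>i<m. (cmod (v $ i))^2) > 0" by linarith
  then have N0: "N \<noteq> 0" unfolding Nr by (simp only: of_real_eq_0_iff)
  have la: "la = s / N" using s1 N0 by simp
  have "cnj la = la" unfolding la using cs by (simp add: Nr)
  then have "la \<in> \<real>" using Reals_cnj_iff by blast
  then obtain r where r: "la = of_real r" by (auto elim: Reals_cases)
  have "of_real (poly (char_poly C) r) = poly (char_poly Cc) (of_real r :: complex)"
    unfolding cp by (simp add: of_real_hom.poly_map_poly)
  also have "\<dots> = 0" using \<open>poly (char_poly Cc) la = 0\<close> r by simp
  finally have "poly (char_poly C) r = 0" by simp
  then have "eigenvalue C r" using eigenvalue_root_char_poly[OF C] by simp
  then show ?thesis unfolding eigenvalue_def eigenvector_def using C by auto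
qed

lemma normalize_vec: fixes x :: "real vec"
  assumes x: "x \<in> carrier_vec n" "x \<noteq> 0\<^sub>v n"
  shows "(1 / sqrt (x \<bullet> x)) \<cdot>\<^sub>v x \<in> carrier_vec n"
    "((1 / sqrt (x \<bullet> x)) \<cdot>\<^sub>v x) \<bullet> ((1 / sqrt (x \<bullet> x)) \<cdot>\<^sub>v x) = 1"
    "\<And>u. u \<in> carrier_vec n \<Longrightarrow> u \<bullet> ((1 / sqrt (x \<bullet> x)) \<cdot>\<^sub>v x) = (1 / sqrt (x \<bullet> x)) * (u \<bullet> x)"
proof -
  have xx: "x \<bullet> x > 0" using self_dot_pos[OF x] .
  show "(1 / sqrt (x \<bullet> x)) \<cdot>\<^sub>v x \<in> carrier_vec n" using x by auto
  have "((1 / sqrt (x \<bullet> x)) \<cdot>\<^sub>v x) \<bullet> ((1 / sqrt (x \<bullet> x)) \<cdot>\<^sub>v x)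
      = (1 / sqrt (x \<bullet> x)) * ((1 / sqrt (x \<bullet> x)) * (x \<bullet> x))"
    using x by (simp add: scalar_prod_smult_left scalar_prod_smult_right)
  also have "\<dots> = 1" using xx by (simp add: field_simps)
  finally show "((1 / sqrt (x \<bullet> x)) \<cdot>\<^sub>v x) \<bullet> ((1 / sqrt (x \<bullet> x)) \<cdot>\<^sub>v x) = 1" .
  show "\<And>u. u \<in> carrier_vec n \<Longrightarrow> u \<bullet> ((1 / sqrt (x \<bullet> x)) \<cdot>\<^sub>v x) = (1 / sqrt (x \<bullet> x)) * (u \<bullet> x)"
    using x by (simp add: scalar_prod_smult_right)
qed

lemma sum_delta_vec: fixes y :: "real vec" assumes "j < N"
  shows "(\<Sum>j'<N. (if j = j' then 1 else 0) * y $ j') = y $ j"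
proof -
  have "(\<Sum>j'<N. (if j = j' then 1 else 0) * y $ j') = (\<Sum>j'<N. if j = j' then y $ j' else 0)"
    by (intro sum.cong) auto
  then show ?thesis using assms by simp
qed

lemma spec_step: fixes A :: "real mat"
  assumes A: "A \<in> carrier_mat n n" and sym: "A\<^sup>T = A" and on: "ON n ps" and k: "length ps < n"
    and ev: "\<forall>i<length ps. A *\<^sub>v ps ! i = es ! i \<cdot>\<^sub>v ps ! i"
  shows "\<exists>\<mu> q. ON n (ps @ [q]) \<and> A *\<^sub>v q = \<mu> \<cdot>\<^sub>v q"
proof -
  define k where "k = length ps"
  obtain ws where rs: "ON n (ps @ ws)" "length (ps @ ws) = n" using ON_full[OF on] k by fastforce
  define rs where "rs = ps @ ws"
  have lws: "length ws = n - k" using rs k_def by auto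
  have rsc: "\<And>i. i < n \<Longrightarrow> rs ! i \<in> carrier_vec n" using rs unfolding rs_def by (auto intro: ON_carrier)
  have rsd: "\<And>i j. i < n \<Longrightarrow> j < n \<Longrightarrow> rs ! i \<bullet> rs ! j = (if i = j then 1 else 0)"
    using ON_dot[OF rs(1)] rs(2) unfolding rs_def by auto
  have ws_rs: "\<And>j. j < n - k \<Longrightarrow> ws ! j = rs ! (k + j)" unfolding rs_def k_def by (simp add: nth_append)
  have ps_rs: "\<And>i. i < k \<Longrightarrow> ps ! i = rs ! i" unfolding rs_def k_def by (simp add: nth_append)
  define W where "W = mat_of_cols n ws"
  have W: "W \<in> carrier_mat n (n - k)" unfolding W_def using lws by auto
  have colW: "\<And>j. j < n - k \<Longrightarrow> col W j = rs ! (k + j)"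
    unfolding W_def using lws ws_rs rsc by (subst col_mat_of_cols) auto
  define C where "C = W\<^sup>T * A * W"
  have C: "C \<in> carrier_mat (n - k) (n - k)" unfolding C_def using W A by auto
  have Csym: "C\<^sup>T = C"
  proof -
    have WT: "W\<^sup>T \<in> carrier_mat (n - k) n" using W by auto
    have AW: "A * W \<in> carrier_mat n (n - k)" using A W by auto
    have c1: "C = W\<^sup>T * (A * W)" unfolding C_def using assoc_mult_mat[OF WT A W] .
    have t1: "C\<^sup>T = (A * W)\<^sup>T * W" unfolding c1 using transpose_mult[OF WT AW] by simp
    have t2: "(A * W)\<^sup>T = W\<^sup>T * A" using transpose_mult[OF A W] sym by simp
    from t1 t2 show "C\<^sup>T = C" unfolding C_def by simp
  qed
  have nk: "0 < n - k" using k k_def by auto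
  obtain \<mu> y where y: "y \<in> carrier_vec (n - k)" "y \<noteq> 0\<^sub>v (n - k)" "C *\<^sub>v y = \<mu> \<cdot>\<^sub>v y"
    using real_eig[OF C Csym nk] by auto
  define x where "x = W *\<^sub>v y"
  have x: "x \<in> carrier_vec n" unfolding x_def using W y by auto
  have dotx: "rs ! i \<bullet> x = (\<Sum>j<n - k. (rs ! i \<bullet> rs ! (k + j)) * y $ j)" if "i < n" for i
    unfolding x_def using mat_vec_dot[OF W rsc[OF that] y(1)] colW by auto
  have dotx1: "rs ! (k + j) \<bullet> x = y $ j" if "j < n - k" for j
  proof -
    have "rs ! (k + j) \<bullet> x = (\<Sum>j'<n - k. (if j = j' then 1 else 0) * y $ j')"
      using dotx[of "k + j"] that rsd by (auto intro!: sum.cong)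
    then show ?thesis using sum_delta_vec[OF that] by simp
  qed
  have dotx2: "rs ! i \<bullet> x = 0" if "i < k" for i
    using dotx[of i] that rsd k k_def by auto
  have Cy: "(C *\<^sub>v y) $ j = rs ! (k + j) \<bullet> (A *\<^sub>v x)" if "j < n - k" for j
  proof -
    have WT: "W\<^sup>T \<in> carrier_mat (n - k) n" using W by auto
    have AW: "A * W \<in> carrier_mat n (n - k)" using A W by auto
    have "C *\<^sub>v y = W\<^sup>T *\<^sub>v (A *\<^sub>v x)" unfolding C_def x_def
      using assoc_mult_mat[OF WT A W] assoc_mult_mat_vec[OF WT AW y(1)] assoc_mult_mat_vec[OF A W y(1)]
      by simp
    then have "(C *\<^sub>v y) $ j = row W\<^sup>T j \<bullet> (A *\<^sub>v x)" using that W by auto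
    also have "\<dots> = rs ! (k + j) \<bullet> (A *\<^sub>v x)" using that W colW by (simp add: row_transpose)
    finally show ?thesis .
  qed
  define z where "z = A *\<^sub>v x - \<mu> \<cdot>\<^sub>v x"
  have z: "z \<in> carrier_vec n" unfolding z_def using A x by auto
  have rz: "rs ! i \<bullet> z = 0" if i: "i < n" for i
  proof -
    have "rs ! i \<bullet> z = rs ! i \<bullet> (A *\<^sub>v x) - \<mu> * (rs ! i \<bullet> x)"
      unfolding z_def using A x rsc[OF i]
      by (simp add: scalar_prod_minus_distrib[of _ n] scalar_prod_smult_right)
    also have "\<dots> = 0"
    proof (cases "i < k")
      case True
      have "rs ! i \<bullet> (A *\<^sub>v x) = (A *\<^sub>v rs ! i) \<bullet> x" using sym_swap[OF A sym rsc[OF i] x] .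
      also have "\<dots> = es ! i * (rs ! i \<bullet> x)"
      proof -
        have "A *\<^sub>v rs ! i = es ! i \<cdot>\<^sub>v rs ! i" using ev True ps_rs[OF True] k_def by metis
        then show ?thesis using rsc[OF i] x by (simp add: scalar_prod_smult_left)
      qed
      finally show ?thesis using dotx2[OF True] by simp
    next
      case False
      then obtain j where j: "i = k + j" "j < n - k" using i by (metis add_diff_inverse_nat diff_less_mono not_less)
      have "rs ! i \<bullet> (A *\<^sub>v x) = \<mu> * y $ j" using Cy[OF j(2)] j y by auto
      then show ?thesis using dotx1[OF j(2)] j by simp
    qed
    finally show ?thesis .
  qed
  have "z \<bullet> z = (\<Sum>i<n. (rs ! i \<bullet> z)^2)" using norm_parseval[OF rs(1) rs(2) z] unfolding rs_def .
  also have "\<dots> = 0" using rz by simp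
  finally have "z = 0\<^sub>v n" using self_dot_zero[OF z] by simp
  then have Ax: "A *\<^sub>v x = \<mu> \<cdot>\<^sub>v x"
  proof (intro eq_vecI)
    fix i assume "z = 0\<^sub>v n" "i < dim_vec (\<mu> \<cdot>\<^sub>v x)"
    then have "z $ i = 0" "i < n" using x by auto
    then show "(A *\<^sub>v x) $ i = (\<mu> \<cdot>\<^sub>v x) $ i" unfolding z_def using A x by auto
  qed (use A x in auto)
  have x0: "x \<noteq> 0\<^sub>v n"
  proof
    assume x0: "x = 0\<^sub>v n"
    have "\<forall>j<n - k. y $ j = 0"
    proof (intro allI impI)
      fix j assume j: "j < n - k"
      have "rs ! (k + j) \<bullet> x = 0" using x0 rsc[of "k + j"] j by simp
      then show "y $ j = 0" using dotx1[OF j] by simp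
    qed
    then have "y = 0\<^sub>v (n - k)" using y by (intro eq_vecI) auto
    then show False using y by simp
  qed
  define q where "q = (1 / sqrt (x \<bullet> x)) \<cdot>\<^sub>v x"
  note nq = normalize_vec[OF x x0, folded q_def]
  have Aq: "A *\<^sub>v q = \<mu> \<cdot>\<^sub>v q" unfolding q_def using A x Ax
    by (simp add: mult_mat_vec[of _ n n] smult_smult_assoc mult.commute)
  have "\<forall>i<length ps. ps ! i \<bullet> q = 0" using nq(3) dotx2 ps_rs rsc k k_def by auto
  then have "ON n (ps @ [q])" using ON_append[OF on nq(1) nq(2)] by auto
  then show ?thesis using Aq by blast
qed

lemma spec_exists: fixes A :: "real mat"
  assumes A: "A \<in> carrier_mat n n" and sym: "A\<^sup>T = A"
  shows "k \<le> n \<Longrightarrow> \<exists>ps es. ON n ps \<and> length ps = k \<and> length es = k \<and>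
           (\<forall>i<k. A *\<^sub>v ps ! i = es ! i \<cdot>\<^sub>v ps ! i)"
proof (induction k)
  case 0 then show ?case by (intro exI[of _ "[]"]) (auto simp: ON_def)
next
  case (Suc k)
  then obtain ps es where IH: "ON n ps" "length ps = k" "length es = k"
    "\<forall>i<k. A *\<^sub>v ps ! i = es ! i \<cdot>\<^sub>v ps ! i" by auto
  obtain \<mu> q where q: "ON n (ps @ [q])" "A *\<^sub>v q = \<mu> \<cdot>\<^sub>v q"
    using spec_step[OF A sym IH(1), of es] IH Suc(2) by auto
  show ?case
  proof (intro exI conjI)
    show "ON n (ps @ [q])" by fact
    show "length (ps @ [q]) = Suc k" "length (es @ [\<mu>]) = Suc k" using IH by auto
    show "\<forall>i<Suc k. A *\<^sub>v (ps @ [q]) ! i = (es @ [\<mu>]) ! i \<cdot>\<^sub>v (ps @ [q]) ! i"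
      using IH q by (auto simp: nth_append less_Suc_eq)
  qed
qed

lemma order_prod_linear: fixes es :: "real list"
  shows "order x (\<Prod>e\<leftarrow>es. [:- e, 1:]) = count (mset es) x"
proof (induction es)
  case Nil then show ?case by (simp add: order_0I)
next
  case (Cons a es)
  have nz: "(\<Prod>e\<leftarrow>es. [:- e, 1:]) \<noteq> 0" by (auto simp: prod_list_zero_iff)
  have "(\<Prod>e\<leftarrow>a # es. [:- e, 1:]) = [:- a, 1:] * (\<Prod>e\<leftarrow>es. [:- e, 1:])" by simp
  moreover have "[:- a, 1:] * (\<Prod>e\<leftarrow>es. [:- e, 1:]) \<noteq> 0"
    using nz mult_eq_0_iff[of "[:- a, 1:]"] by (metis one_neq_zero pCons_eq_0_iff)
  ultimately have "order x (\<Prod>e\<leftarrow>a # es. [:- e, 1:]) = order x [:- a, 1:] + order x (\<Prod>e\<leftarrow>es. [:- e, 1:])"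
    using order_mult by metis
  then show ?case using Cons by (simp add: order_linear')
qed

lemma eigs_desc_prod: fixes A :: "real mat"
  assumes cp: "char_poly A = (\<Prod>e\<leftarrow>es. [:- e, 1:])"
  shows "eigs_desc A = rev (sort es)"
proof -
  define p where "p = (\<Prod>e\<leftarrow>es. [:- e, 1:])"
  have roots: "{x. poly p x = 0} = set es"
    unfolding p_def by (auto simp: poly_prod_list_zero_iff)
  define L where "L = concat (map (\<lambda>x. replicate (order x p) x) (sorted_list_of_set (set es)))"
  have "mset L = sum_list (map (\<lambda>x. replicate_mset (count (mset es) x) x) (sorted_list_of_set (set es)))"
    unfolding L_def mset_concat map_map p_def by (simp add: o_def order_prod_linear)
  also have "\<dots> = (\<Sum>x\<in>set es. replicate_mset (count (mset es) x) x)"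
    by (subst sum_list_distinct_conv_sum_set) auto
  also have "\<dots> = mset es"
  proof (rule multiset_eqI)
    fix y
    have "count (\<Sum>x\<in>set es. replicate_mset (count (mset es) x) x) y
        = (\<Sum>x\<in>set es. if y = x then count (mset es) x else 0)"
      by (simp add: count_sum)
    also have "\<dots> = count (mset es) y" by (simp add: sum.delta)
    finally show "count (\<Sum>x\<in>set es. replicate_mset (count (mset es) x) x) y = count (mset es) y" .
  qed
  finally have mL: "mset L = mset es" .
  have "sort L = sort es" using properties_for_sort[of "sort es" L] mL by simp
  moreover have "eigs_desc A = rev (sort L)"
    unfolding eigs_desc_def Let_def cp roots[unfolded p_def] L_def p_def ..
  ultimately show ?thesis by simp
qed

lemma charpoly_from_basis: fixes A :: "real mat"
  assumes A: "A \<in> carrier_mat n n" and on: "ON n ps" and len: "length ps = n" and les: "length es = n"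
    and ev: "\<forall>i<n. A *\<^sub>v ps ! i = es ! i \<cdot>\<^sub>v ps ! i"
  shows "char_poly A = (\<Prod>e\<leftarrow>es. [:- e, 1:])"
proof -
  define P where "P = mat_of_cols n ps"
  define D where "D = mat n n (\<lambda>(i,j). if i = j then es ! i else (0::real))"
  have P: "P \<in> carrier_mat n n" unfolding P_def using len by auto
  have D: "D \<in> carrier_mat n n" unfolding D_def by auto
  have psc: "\<And>i. i < n \<Longrightarrow> ps ! i \<in> carrier_vec n" using on len by (auto intro: ON_carrier)
  have colP: "\<And>j. j < n \<Longrightarrow> col P j = ps ! j" unfolding P_def using len psc by (auto intro: col_mat_of_cols)
  have "P\<^sup>T * P = 1\<^sub>m n"
  proof (rule eq_matI)
    fix i j assume ij: "i < dim_row (1\<^sub>m n)" "j < dim_col (1\<^sub>m n)"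
    then have "(P\<^sup>T * P) $$ (i, j) = col P i \<bullet> col P j" using P by (auto simp: row_transpose)
    also have "\<dots> = 1\<^sub>m n $$ (i, j)" using ij colP ON_dot[OF on] len by auto
    finally show "(P\<^sup>T * P) $$ (i, j) = 1\<^sub>m n $$ (i, j)" .
  qed (use P in auto)
  then have PPt: "P * P\<^sup>T = 1\<^sub>m n" using mat_mult_left_right_inverse[of "P\<^sup>T" n P] P by auto
  have PtP: "P\<^sup>T * P = 1\<^sub>m n" by fact
  have AP: "A * P = P * D"
  proof (rule eq_matI)
    fix i j assume ij: "i < dim_row (P * D)" "j < dim_col (P * D)"
    then have i: "i < n" and j: "j < n" using P D by auto
    have "(A * P) $$ (i, j) = (A *\<^sub>v col P j) $ i" using A P i j by auto
    also have "\<dots> = es ! j * P $$ (i, j)"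
    proof -
      have "P $$ (i, j) = ps ! j $ i" using index_col[of i P j] colP[OF j] P i j by auto
      moreover have "dim_vec (ps ! j) = n" using psc[OF j] by auto
      ultimately show ?thesis using ev colP j i P by auto
    qed
    also have "\<dots> = (P * D) $$ (i, j)"
    proof -
      have "(P * D) $$ (i, j) = (\<Sum>l\<in>{0..<n}. P $$ (i, l) * D $$ (l, j))"
        using P D i j by (auto simp: scalar_prod_def)
      also have "\<dots> = (\<Sum>l\<in>{0..<n}. if l = j then P $$ (i, j) * es ! j else 0)"
        using j unfolding D_def by (intro sum.cong) auto
      also have "\<dots> = P $$ (i, j) * es ! j" using j by simp
      finally show ?thesis by simp
    qed
    finally show "(A * P) $$ (i, j) = (P * D) $$ (i, j)" .
  qed (use A P D in auto)
  have "A = A * (P * P\<^sup>T)" using PPt A by simp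
  also have "\<dots> = A * P * P\<^sup>T" using A P by (simp add: assoc_mult_mat[of _ n n _ n _ n])
  also have "\<dots> = P * D * P\<^sup>T" using AP by simp
  finally have "A = P * D * P\<^sup>T" .
  then have "similar_mat_wit A D P P\<^sup>T" unfolding similar_mat_wit_def Let_def
    using A P D PPt PtP by auto
  then have "similar_mat A D" unfolding similar_mat_def by blast
  then have "char_poly A = char_poly D" by (rule char_poly_similar)
  also have "char_poly D = (\<Prod>a\<leftarrow>diag_mat D. [:- a, 1:])"
    by (rule char_poly_upper_triangular[OF D]) (auto simp: upper_triangular_def D_def)
  also have "diag_mat D = es" unfolding diag_mat_def D_def using les
    by (auto intro: nth_equalityI)
  finally show ?thesis .
qed

lemma spectral: fixes A :: "real mat"
  assumes A: "A \<in> carrier_mat n n" and sym: "A\<^sup>T = A"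
  shows "length (eigs_desc A) = n"
    "\<And>i j. i \<le> j \<Longrightarrow> j < n \<Longrightarrow> eigs_desc A ! j \<le> eigs_desc A ! i"
    "\<exists>ps. ON n ps \<and> length ps = n \<and> (\<forall>i<n. A *\<^sub>v ps ! i = eigs_desc A ! i \<cdot>\<^sub>v ps ! i)"
proof -
  obtain ps es where pe: "ON n ps" "length ps = n" "length es = n" "\<forall>i<n. A *\<^sub>v ps ! i = es ! i \<cdot>\<^sub>v ps ! i"
    using spec_exists[OF A sym, of n] by auto
  have ls: "eigs_desc A = rev (sort es)" using eigs_desc_prod charpoly_from_basis[OF A pe] by blast
  show len: "length (eigs_desc A) = n" using ls pe by simp
  show "\<And>i j. i \<le> j \<Longrightarrow> j < n \<Longrightarrow> eigs_desc A ! j \<le> eigs_desc A ! i"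
  proof -
    fix i j assume ij: "i \<le> j" "j < n"
    have "eigs_desc A ! j = sort es ! (n - Suc j)" "eigs_desc A ! i = sort es ! (n - Suc i)"
      using ls ij pe by (auto simp: rev_nth)
    then show "eigs_desc A ! j \<le> eigs_desc A ! i"
      using sorted_nth_mono[of "sort es" "n - Suc j" "n - Suc i"] ij pe by auto
  qed
  have "mset (eigs_desc A) = mset es" using ls by simp
  from permutation_Ex_bij[OF this] obtain f where
    f: "bij_betw f {..<n} {..<n}" "\<forall>i<n. eigs_desc A ! i = es ! f i" using len pe by auto
  have fi: "\<And>i. i < n \<Longrightarrow> f i < n" using f(1) by (auto dest: bij_betwE)
  have finj: "\<And>i j. i < n \<Longrightarrow> j < n \<Longrightarrow> f i = f j \<Longrightarrow> i = j"
    using f(1) unfolding bij_betw_def inj_on_def by auto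
  define qs where "qs = map (\<lambda>i. ps ! f i) [0..<n]"
  have qsi: "\<And>i. i < n \<Longrightarrow> qs ! i = ps ! f i" unfolding qs_def by auto
  have "ON n qs" unfolding ON_def
  proof (intro conjI ballI allI impI)
    fix p assume "p \<in> set qs"
    then obtain i where "i < n" "p = ps ! f i" unfolding qs_def by auto
    then show "p \<in> carrier_vec n" using fi ON_carrier[OF pe(1)] pe(2) by auto
  next
    fix i j assume ij: "i < length qs" "j < length qs"
    then have i: "i < n" and j: "j < n" unfolding qs_def by auto
    have "qs ! i \<bullet> qs ! j = ps ! f i \<bullet> ps ! f j" using qsi i j by simp
    also have "\<dots> = (if f i = f j then 1 else 0)" using ON_dot[OF pe(1)] pe(2) fi i j by simp
    also have "\<dots> = (if i = j then 1 else 0)" using finj i j by auto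
    finally show "qs ! i \<bullet> qs ! j = (if i = j then 1 else 0)" .
  qed
  moreover have "\<forall>i<n. A *\<^sub>v qs ! i = eigs_desc A ! i \<cdot>\<^sub>v qs ! i"
    using qsi f(2) pe(4) fi by auto
  moreover have "length qs = n" unfolding qs_def by simp
  ultimately show "\<exists>ps. ON n ps \<and> length ps = n \<and> (\<forall>i<n. A *\<^sub>v ps ! i = eigs_desc A ! i \<cdot>\<^sub>v ps ! i)"
    by blast
qed

lemma sum_split_at: "(m::nat) \<le> d \<Longrightarrow> (\<Sum>i<d. f i) = (\<Sum>i<m. f i) + (\<Sum>i\<in>{m..<d}. f i)"
  using sum.atLeastLessThan_concat[of 0 m d f] by (simp add: atLeast0LessThan)

lemma sum_trunc: "(m::nat) \<le> d \<Longrightarrow> (\<And>i. m \<le> i \<Longrightarrow> i < d \<Longrightarrow> f i = 0) \<Longrightarrow> (\<Sum>i<d. f i) = (\<Sum>i<m. f i)"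
  by (simp add: sum_split_at)

lemma vec_norm_sum: "(x::real vec) \<in> carrier_vec m \<Longrightarrow> x \<bullet> x = (\<Sum>j<m. (x $ j)^2)"
  unfolding scalar_prod_def by (auto simp: atLeast0LessThan power2_eq_square)

lemma mat_mult_entry: fixes A B :: "real mat"
  assumes "A \<in> carrier_mat n k" "B \<in> carrier_mat k m" "i < n" "j < m"
  shows "(A * B) $$ (i, j) = (\<Sum>l<k. A $$ (i, l) * B $$ (l, j))"
  using assms by (auto simp: scalar_prod_def atLeast0LessThan)

lemma oncols:
  fixes V :: "real mat"
  assumes V: "V \<in> carrier_mat d m" and VV: "V\<^sup>T * V = 1\<^sub>m m"
  shows "\<And>j k. j < m \<Longrightarrow> k < m \<Longrightarrow> col V j \<bullet> col V k = (if j = k then 1 else 0)"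
    "\<And>x j. (x::real vec) \<in> carrier_vec m \<Longrightarrow> j < m \<Longrightarrow> col V j \<bullet> (V *\<^sub>v x) = x $ j"
    "\<And>x. (x::real vec) \<in> carrier_vec m \<Longrightarrow> (V *\<^sub>v x) \<bullet> (V *\<^sub>v x) = x \<bullet> x"
    "\<And>u j. (u::real vec) \<in> carrier_vec d \<Longrightarrow> j < m \<Longrightarrow> (V\<^sup>T *\<^sub>v u) $ j = col V j \<bullet> u"
    "\<And>u. (u::real vec) \<in> carrier_vec d \<Longrightarrow> (V\<^sup>T *\<^sub>v u) \<bullet> (V\<^sup>T *\<^sub>v u) \<le> u \<bullet> u"
proof -
  show cc: "\<And>j k. j < m \<Longrightarrow> k < m \<Longrightarrow> col V j \<bullet> col V k = (if j = k then 1 else 0)"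
  proof -
    fix j k assume jk: "j < m" "k < m"
    have "(V\<^sup>T * V) $$ (j, k) = col V j \<bullet> col V k" using V jk by (auto simp: row_transpose)
    then show "col V j \<bullet> col V k = (if j = k then 1 else 0)" using VV jk by auto
  qed
  show cx: "\<And>x j. (x::real vec) \<in> carrier_vec m \<Longrightarrow> j < m \<Longrightarrow> col V j \<bullet> (V *\<^sub>v x) = x $ j"
  proof -
    fix x :: "real vec" and j assume x: "x \<in> carrier_vec m" and j: "j < m"
    have "col V j \<bullet> (V *\<^sub>v x) = (\<Sum>k<m. (col V j \<bullet> col V k) * x $ k)"
      using mat_vec_dot[OF V _ x] V j by auto
    also have "\<dots> = (\<Sum>k<m. if j = k then x $ k else 0)" using cc j by (intro sum.cong) auto
    also have "\<dots> = x $ j" using j by simp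
    finally show "col V j \<bullet> (V *\<^sub>v x) = x $ j" .
  qed
  show "\<And>x. (x::real vec) \<in> carrier_vec m \<Longrightarrow> (V *\<^sub>v x) \<bullet> (V *\<^sub>v x) = x \<bullet> x"
  proof -
    fix x :: "real vec" assume x: "x \<in> carrier_vec m"
    have "(V *\<^sub>v x) \<bullet> (V *\<^sub>v x) = (\<Sum>k<m. ((V *\<^sub>v x) \<bullet> col V k) * x $ k)"
      using mat_vec_dot[OF V _ x] V x by auto
    also have "\<dots> = (\<Sum>k<m. (x $ k)^2)"
      using cx[OF x] x V comm_scalar_prod[of "V *\<^sub>v x" d] by (intro sum.cong) (auto simp: power2_eq_square)
    also have "\<dots> = x \<bullet> x" using vec_norm_sum[OF x] by simp
    finally show "(V *\<^sub>v x) \<bullet> (V *\<^sub>v x) = x \<bullet> x" .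
  qed
  note nx = this
  show ct: "\<And>u j. (u::real vec) \<in> carrier_vec d \<Longrightarrow> j < m \<Longrightarrow> (V\<^sup>T *\<^sub>v u) $ j = col V j \<bullet> u"
    using V by (auto simp: row_transpose)
  show "\<And>u. (u::real vec) \<in> carrier_vec d \<Longrightarrow> (V\<^sup>T *\<^sub>v u) \<bullet> (V\<^sup>T *\<^sub>v u) \<le> u \<bullet> u"
  proof -
    fix u :: "real vec" assume u: "u \<in> carrier_vec d"
    define t where "t = V\<^sup>T *\<^sub>v u"
    have t: "t \<in> carrier_vec m" unfolding t_def using V u by auto
    define s where "s = V *\<^sub>v t"
    have s: "s \<in> carrier_vec d" unfolding s_def using V t by auto
    have us: "u \<bullet> s = t \<bullet> t"
    proof -
      have "u \<bullet> s = (\<Sum>k<m. (u \<bullet> col V k) * t $ k)" unfolding s_def using mat_vec_dot[OF V u t] .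
      also have "\<dots> = (\<Sum>k<m. (t $ k)^2)"
        using ct[OF u] u V comm_scalar_prod[of u d] unfolding t_def
        by (intro sum.cong) (auto simp: power2_eq_square)
      also have "\<dots> = t \<bullet> t" using vec_norm_sum[OF t] by simp
      finally show ?thesis .
    qed
    have ss: "s \<bullet> s = t \<bullet> t" unfolding s_def using nx[OF t] .
    have "0 \<le> (u - s) \<bullet> (u - s)" by (rule self_dot_nonneg)
    also have "(u - s) \<bullet> (u - s) = u \<bullet> u - 2 * (u \<bullet> s) + s \<bullet> s"
      using u s by (simp add: minus_scalar_prod_distrib[of _ d] scalar_prod_minus_distrib[of _ d]
          comm_scalar_prod[of s d u])
    finally show "(V\<^sup>T *\<^sub>v u) \<bullet> (V\<^sup>T *\<^sub>v u) \<le> u \<bullet> u" using us ss unfolding t_def by simp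
  qed
qed

definition eigsys :: "nat \<Rightarrow> real mat \<Rightarrow> real vec list \<Rightarrow> real list \<Rightarrow> bool" where
  "eigsys d K ps ls \<longleftrightarrow> K \<in> carrier_mat d d \<and> K\<^sup>T = K \<and> ON d ps \<and> length ps = d \<and> length ls = d \<and>
     (\<forall>i<d. K *\<^sub>v ps ! i = ls ! i \<cdot>\<^sub>v ps ! i) \<and> (\<forall>i j. i \<le> j \<longrightarrow> j < d \<longrightarrow> ls ! j \<le> ls ! i)"

lemma eigsys_exists: assumes "K \<in> carrier_mat d d" "K\<^sup>T = K"
  shows "\<exists>ps. eigsys d K ps (eigs_desc K)"
  using spectral[OF assms] unfolding eigsys_def using assms by blast

lemma rayleigh_V:
  fixes K V :: "real mat"
  assumes es: "eigsys d K ps ls" and V: "V \<in> carrier_mat d m" and VV: "V\<^sup>T * V = 1\<^sub>m m"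
    and md: "m \<le> d" and m0: "0 < m" and evV: "\<forall>j<m. K *\<^sub>v col V j = ls ! j \<cdot>\<^sub>v col V j"
    and x: "x \<in> carrier_vec m"
  shows "ls ! (m - 1) * (x \<bullet> x) \<le> (V *\<^sub>v x) \<bullet> (K *\<^sub>v (V *\<^sub>v x))"
proof -
  have K: "K \<in> carrier_mat d d" "K\<^sup>T = K" using es unfolding eigsys_def by auto
  have mono: "\<And>i j. i \<le> j \<Longrightarrow> j < d \<Longrightarrow> ls ! j \<le> ls ! i" using es unfolding eigsys_def by auto
  define w where "w = V *\<^sub>v x"
  have w: "w \<in> carrier_vec d" unfolding w_def using V x by auto
  have Kw: "K *\<^sub>v w \<in> carrier_vec d" using K w by auto
  have cV: "\<And>j. j < m \<Longrightarrow> col V j \<in> carrier_vec d" using V by auto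
  have "w \<bullet> (K *\<^sub>v w) = (K *\<^sub>v w) \<bullet> w" using comm_scalar_prod[OF w Kw] .
  also have "\<dots> = (\<Sum>j<m. ((K *\<^sub>v w) \<bullet> col V j) * x $ j)" unfolding w_def
    using mat_vec_dot[OF V _ x] Kw[unfolded w_def] by auto
  also have "\<dots> = (\<Sum>j<m. ls ! j * (x $ j)^2)"
  proof (rule sum.cong)
    fix j assume "j \<in> {..<m}"
    then have j: "j < m" by auto
    have "(K *\<^sub>v w) \<bullet> col V j = w \<bullet> (K *\<^sub>v col V j)" using sym_swap[OF K w cV[OF j]] by simp
    also have "\<dots> = ls ! j * (w \<bullet> col V j)" using evV j w cV[OF j] by (simp add: scalar_prod_smult_right)
    also have "w \<bullet> col V j = x $ j" using oncols(2)[OF V VV x j] comm_scalar_prod[OF w cV[OF j]]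
      unfolding w_def by simp
    finally show "((K *\<^sub>v w) \<bullet> col V j) * x $ j = ls ! j * (x $ j)^2" by (simp add: power2_eq_square)
  qed simp
  also have "\<dots> \<ge> (\<Sum>j<m. ls ! (m - 1) * (x $ j)^2)"
    using mono md by (intro sum_mono mult_right_mono) auto
  finally have "(\<Sum>j<m. ls ! (m - 1) * (x $ j)^2) \<le> w \<bullet> (K *\<^sub>v w)" .
  moreover have "(\<Sum>j<m. ls ! (m - 1) * (x $ j)^2) = ls ! (m - 1) * (x \<bullet> x)"
    using vec_norm_sum[OF x] by (simp add: sum_distrib_left)
  ultimately show ?thesis unfolding w_def by simp
qed

lemma upper_C:
  fixes K :: "real mat"
  assumes es: "eigsys d K ps ls" and md: "m < d" and w: "w \<in> carrier_vec d"
  shows "w \<bullet> (K *\<^sub>v w) \<le> ls ! 0 * (\<Sum>i<m. (ps ! i \<bullet> w)^2) + ls ! m * (w \<bullet> w - (\<Sum>i<m. (ps ! i \<bullet> w)^2))"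
proof -
  have K: "K \<in> carrier_mat d d" "K\<^sup>T = K" and on: "ON d ps" "length ps = d"
    and ev: "\<forall>i<d. K *\<^sub>v ps ! i = ls ! i \<cdot>\<^sub>v ps ! i" using es unfolding eigsys_def by auto
  have mono: "\<And>i j. i \<le> j \<Longrightarrow> j < d \<Longrightarrow> ls ! j \<le> ls ! i" using es unfolding eigsys_def by auto
  have "w \<bullet> (K *\<^sub>v w) = (\<Sum>i<d. ls ! i * (ps ! i \<bullet> w)^2)" using quad_form[OF on K _ w] ev by auto
  also have "\<dots> = (\<Sum>i<m. ls ! i * (ps ! i \<bullet> w)^2) + (\<Sum>i\<in>{m..<d}. ls ! i * (ps ! i \<bullet> w)^2)"
    using md by (simp add: sum_split_at)
  also have "\<dots> \<le> (\<Sum>i<m. ls ! 0 * (ps ! i \<bullet> w)^2) + (\<Sum>i\<in>{m..<d}. ls ! m * (ps ! i \<bullet> w)^2)"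
    using mono md by (intro add_mono sum_mono mult_right_mono) auto
  also have "\<dots> = ls ! 0 * (\<Sum>i<m. (ps ! i \<bullet> w)^2) + ls ! m * (\<Sum>i\<in>{m..<d}. (ps ! i \<bullet> w)^2)"
    by (simp add: sum_distrib_left)
  also have "(\<Sum>i\<in>{m..<d}. (ps ! i \<bullet> w)^2) = w \<bullet> w - (\<Sum>i<m. (ps ! i \<bullet> w)^2)"
    using norm_parseval[OF on w] sum_split_at[of m d "\<lambda>i. (ps ! i \<bullet> w)^2"] md by simp
  finally show ?thesis .
qed

lemma span_E:
  fixes K V :: "real mat"
  assumes es: "eigsys d K ps ls" and V: "V \<in> carrier_mat d m" and VV: "V\<^sup>T * V = 1\<^sub>m m"
    and md: "m < d" and m0: "0 < m" and gap: "ls ! m < ls ! (m - 1)"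
    and evV: "\<forall>j<m. K *\<^sub>v col V j = ls ! j \<cdot>\<^sub>v col V j"
    and w: "w \<in> carrier_vec d"
  shows "(V\<^sup>T *\<^sub>v w) \<bullet> (V\<^sup>T *\<^sub>v w) = (\<Sum>i<m. (ps ! i \<bullet> w)^2)"
proof -
  have K: "K \<in> carrier_mat d d" "K\<^sup>T = K" and on: "ON d ps" "length ps = d"
    and ev: "\<forall>i<d. K *\<^sub>v ps ! i = ls ! i \<cdot>\<^sub>v ps ! i" using es unfolding eigsys_def by auto
  have mono: "\<And>i j. i \<le> j \<Longrightarrow> j < d \<Longrightarrow> ls ! j \<le> ls ! i" using es unfolding eigsys_def by auto
  have psc: "\<And>i. i < d \<Longrightarrow> ps ! i \<in> carrier_vec d" using on by (auto intro: ON_carrier)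
  have cV: "\<And>j. j < m \<Longrightarrow> col V j \<in> carrier_vec d" using V by auto
  have z0: "ps ! i \<bullet> col V j = 0" if ij: "m \<le> i" "i < d" "j < m" for i j
  proof -
    have "ls ! i * (ps ! i \<bullet> col V j) = (K *\<^sub>v ps ! i) \<bullet> col V j"
      using ev ij psc[of i] cV[of j] by (simp add: scalar_prod_smult_left)
    also have "\<dots> = ps ! i \<bullet> (K *\<^sub>v col V j)" using sym_swap[OF K psc[of i] cV[of j]] ij by simp
    also have "\<dots> = ls ! j * (ps ! i \<bullet> col V j)"
      using evV ij psc[of i] cV[of j] by (simp add: scalar_prod_smult_right)
    finally have "(ls ! i - ls ! j) * (ps ! i \<bullet> col V j) = 0" by (simp add: algebra_simps)
    moreover have "ls ! i \<le> ls ! m" using mono ij by auto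
    moreover have "ls ! (m - 1) \<le> ls ! j" using mono ij md by auto
    ultimately show ?thesis using gap by auto
  qed
  define c where "c = (\<lambda>i j. ps ! i \<bullet> col V j)"
  define C where "C = mat m m (\<lambda>(i,j). c i j)"
  have C: "C \<in> carrier_mat m m" unfolding C_def by auto
  have "C\<^sup>T * C = 1\<^sub>m m"
  proof (rule eq_matI)
    fix j k assume jk: "j < dim_row (1\<^sub>m m)" "k < dim_col (1\<^sub>m m)"
    then have j: "j < m" and k: "k < m" by auto
    have "(C\<^sup>T * C) $$ (j, k) = (\<Sum>l<m. c l j * c l k)"
      using mat_mult_entry[of "C\<^sup>T" m m C m j k] C j k unfolding C_def by auto
    also have "\<dots> = (\<Sum>l<d. c l j * c l k)"
      using z0 j k md unfolding c_def by (intro sum_trunc[symmetric]) auto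
    also have "\<dots> = col V j \<bullet> col V k" unfolding c_def using parseval[OF on cV[OF j] cV[OF k]] by simp
    also have "\<dots> = 1\<^sub>m m $$ (j, k)" using oncols(1)[OF V VV j k] j k by simp
    finally show "(C\<^sup>T * C) $$ (j, k) = 1\<^sub>m m $$ (j, k)" .
  qed (use C in auto)
  then have "C * C\<^sup>T = 1\<^sub>m m" using mat_mult_left_right_inverse[of "C\<^sup>T" m C] C by auto
  then have CCt: "(\<Sum>j<m. c i j * c k j) = (if i = k then 1 else 0)" if "i < m" "k < m" for i k
  proof -
    have "(C * C\<^sup>T) $$ (i, k) = (\<Sum>j<m. c i j * c k j)"
      using mat_mult_entry[of C m m "C\<^sup>T" m i k] C that unfolding C_def by auto
    then show ?thesis using \<open>C * C\<^sup>T = 1\<^sub>m m\<close> that by simp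
  qed
  define a where "a = (\<lambda>i. ps ! i \<bullet> w)"
  have vw: "col V j \<bullet> w = (\<Sum>i<m. c i j * a i)" if j: "j < m" for j
  proof -
    have "col V j \<bullet> w = (\<Sum>i<d. (ps ! i \<bullet> col V j) * (ps ! i \<bullet> w))" using parseval[OF on cV[OF j] w] .
    also have "\<dots> = (\<Sum>i<m. c i j * a i)" unfolding c_def a_def
      using z0 j md by (intro sum_trunc) auto
    finally show ?thesis .
  qed
  have "(V\<^sup>T *\<^sub>v w) \<bullet> (V\<^sup>T *\<^sub>v w) = (\<Sum>j<m. ((V\<^sup>T *\<^sub>v w) $ j)^2)"
    using V w by (intro vec_norm_sum) auto
  also have "\<dots> = (\<Sum>j<m. (\<Sum>i<m. c i j * a i)^2)"
    using oncols(4)[OF V VV w] vw by auto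
  also have "\<dots> = (\<Sum>j<m. \<Sum>i<m. \<Sum>k<m. (c i j * a i) * (c k j * a k))"
    by (simp add: power2_eq_square sum_product)
  also have "\<dots> = (\<Sum>i<m. \<Sum>k<m. \<Sum>j<m. (c i j * a i) * (c k j * a k))"
    by (subst sum.swap) (rule sum.cong[OF refl], rule sum.swap)
  also have "\<dots> = (\<Sum>i<m. \<Sum>k<m. a i * a k * (\<Sum>j<m. c i j * c k j))"
    by (intro sum.cong refl, subst sum_distrib_left, intro sum.cong refl) (simp only: mult_ac)
  also have "\<dots> = (\<Sum>i<m. \<Sum>k<m. if i = k then a i * a k else 0)"
    using CCt by (intro sum.cong) auto
  also have "\<dots> = (\<Sum>i<m. (a i)^2)" by (simp add: power2_eq_square)
  finally show ?thesis unfolding a_def .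
qed

lemma zero_row_kernel: fixes B :: "real mat"
  assumes B: "B \<in> carrier_mat m m" and m0: "0 < m" and z: "\<forall>j<m. B $$ (m - 1, j) = 0"
  shows "\<exists>y. y \<in> carrier_vec m \<and> y \<noteq> 0\<^sub>v m \<and> B *\<^sub>v y = 0\<^sub>v m"
proof -
  have "B\<^sup>T *\<^sub>v unit_vec m (m - 1) = 0\<^sub>v m"
  proof (rule eq_vecI)
    fix i assume "i < dim_vec (0\<^sub>v m :: real vec)"
    then have i: "i < m" by auto
    have "(B\<^sup>T *\<^sub>v unit_vec m (m - 1)) $ i = row B\<^sup>T i \<bullet> unit_vec m (m - 1)" using i B by auto
    also have "\<dots> = (row B\<^sup>T i) $ (m - 1)" using i B m0 by (auto simp: scalar_prod_right_unit)
    also have "\<dots> = 0" using i B m0 z by auto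
    finally show "(B\<^sup>T *\<^sub>v unit_vec m (m - 1)) $ i = 0\<^sub>v m $ i" using i by auto
  qed (use B in auto)
  moreover have "unit_vec m (m - 1) \<noteq> (0\<^sub>v m :: real vec)"
  proof
    assume "unit_vec m (m - 1) = (0\<^sub>v m :: real vec)"
    then have "unit_vec m (m - 1) $ (m - 1) = (0\<^sub>v m :: real vec) $ (m - 1)" by simp
    then show False using m0 by auto
  qed
  moreover have BT: "B\<^sup>T \<in> carrier_mat m m" using B by auto
  ultimately have "det B\<^sup>T = 0" using det_0_iff_vec_prod_zero[OF BT] unit_vec_carrier[of m "m - 1"]
    by blast
  then have "det B = 0" using det_transpose[OF B] by simp
  then show ?thesis using det_0_iff_vec_prod_zero[OF B] by auto
qed

lemma weyl:
  fixes K K' :: "real mat"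
  assumes es: "eigsys d K ps ls" and es': "eigsys d K' qs ls'"
    and pert: "\<forall>x\<in>carrier_vec d. \<bar>x \<bullet> (K' *\<^sub>v x) - x \<bullet> (K *\<^sub>v x)\<bar> \<le> e * (x \<bullet> x)"
    and m0: "0 < m" and md: "m \<le> d"
  shows "ls ! (m - 1) - e \<le> ls' ! (m - 1)"
proof -
  have K: "K \<in> carrier_mat d d" "K\<^sup>T = K" and on: "ON d ps" "length ps = d"
    and ev: "\<forall>i<d. K *\<^sub>v ps ! i = ls ! i \<cdot>\<^sub>v ps ! i" using es unfolding eigsys_def by auto
  have mono: "\<And>i j. i \<le> j \<Longrightarrow> j < d \<Longrightarrow> ls ! j \<le> ls ! i" using es unfolding eigsys_def by auto
  have K': "K' \<in> carrier_mat d d" "K'\<^sup>T = K'" and on': "ON d qs" "length qs = d"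
    and ev': "\<forall>i<d. K' *\<^sub>v qs ! i = ls' ! i \<cdot>\<^sub>v qs ! i" using es' unfolding eigsys_def by auto
  have mono': "\<And>i j. i \<le> j \<Longrightarrow> j < d \<Longrightarrow> ls' ! j \<le> ls' ! i" using es' unfolding eigsys_def by auto
  have psc: "\<And>i. i < d \<Longrightarrow> ps ! i \<in> carrier_vec d" using on by (auto intro: ON_carrier)
  have qsc: "\<And>i. i < d \<Longrightarrow> qs ! i \<in> carrier_vec d" using on' by (auto intro: ON_carrier)
  define B where "B = mat m m (\<lambda>(i,j). if i < m - 1 then qs ! i \<bullet> ps ! j else (0::real))"
  have B: "B \<in> carrier_mat m m" unfolding B_def by auto
  obtain y where y: "y \<in> carrier_vec m" "y \<noteq> 0\<^sub>v m" "B *\<^sub>v y = 0\<^sub>v m"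
    using zero_row_kernel[OF B m0] m0 unfolding B_def by auto
  define Pm where "Pm = mat_of_cols d (take m ps)"
  have Pm: "Pm \<in> carrier_mat d m" unfolding Pm_def using on md by auto
  have colP: "\<And>j. j < m \<Longrightarrow> col Pm j = ps ! j" unfolding Pm_def using on md psc
    by (subst col_mat_of_cols) auto
  define z where "z = Pm *\<^sub>v y"
  have z: "z \<in> carrier_vec d" unfolding z_def using Pm y by auto
  have pz: "ps ! k \<bullet> z = (if k < m then y $ k else 0)" if k: "k < d" for k
  proof -
    have "ps ! k \<bullet> z = (\<Sum>j<m. (ps ! k \<bullet> ps ! j) * y $ j)"
      unfolding z_def using mat_vec_dot[OF Pm psc[OF k] y(1)] colP by simp
    also have "\<dots> = (\<Sum>j<m. if k = j then y $ j else 0)"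
      using ON_dot[OF on(1)] on(2) k md by (intro sum.cong) auto
    also have "\<dots> = (if k < m then y $ k else 0)" by simp
    finally show ?thesis .
  qed
  have qz: "qs ! i \<bullet> z = 0" if i: "i < m - 1" for i
  proof -
    have "qs ! i \<bullet> z = (\<Sum>j<m. (qs ! i \<bullet> ps ! j) * y $ j)"
      unfolding z_def using mat_vec_dot[OF Pm qsc y(1)] colP i md by simp
    also have "\<dots> = (\<Sum>j<m. B $$ (i, j) * y $ j)"
      using i md unfolding B_def by (intro sum.cong) auto
    also have "\<dots> = (B *\<^sub>v y) $ i" using B y(1) i
      by (auto simp: scalar_prod_def atLeast0LessThan row_def intro!: sum.cong)
    also have "\<dots> = 0" using y i by auto
    finally show ?thesis .
  qed
  have zz: "z \<bullet> z = y \<bullet> y"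
  proof -
    have "z \<bullet> z = (\<Sum>k<d. (ps ! k \<bullet> z)^2)" using norm_parseval[OF on z] .
    also have "\<dots> = (\<Sum>k<m. (y $ k)^2)" using pz md by (subst sum_trunc[of m]) auto
    also have "\<dots> = y \<bullet> y" using vec_norm_sum[OF y(1)] by simp
    finally show ?thesis .
  qed
  have zpos: "z \<bullet> z > 0" using zz self_dot_pos[OF y(1,2)] by simp
  have zK: "ls ! (m - 1) * (z \<bullet> z) \<le> z \<bullet> (K *\<^sub>v z)"
  proof -
    have "z \<bullet> (K *\<^sub>v z) = (\<Sum>k<d. ls ! k * (ps ! k \<bullet> z)^2)" using quad_form[OF on K _ z] ev by auto
    also have "\<dots> = (\<Sum>k<m. ls ! k * (y $ k)^2)" using pz md by (subst sum_trunc[of m]) auto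
    also have "\<dots> \<ge> (\<Sum>k<m. ls ! (m - 1) * (y $ k)^2)"
      using mono md by (intro sum_mono mult_right_mono) auto
    finally have "(\<Sum>k<m. ls ! (m - 1) * (y $ k)^2) \<le> z \<bullet> (K *\<^sub>v z)" .
    moreover have "(\<Sum>k<m. ls ! (m - 1) * (y $ k)^2) = ls ! (m - 1) * (z \<bullet> z)"
      using zz vec_norm_sum[OF y(1)] by (simp add: sum_distrib_left)
    ultimately show ?thesis by simp
  qed
  have zK': "z \<bullet> (K' *\<^sub>v z) \<le> ls' ! (m - 1) * (z \<bullet> z)"
  proof -
    have "z \<bullet> (K' *\<^sub>v z) = (\<Sum>i<d. ls' ! i * (qs ! i \<bullet> z)^2)" using quad_form[OF on' K' _ z] ev' by auto
    also have "\<dots> \<le> (\<Sum>i<d. ls' ! (m - 1) * (qs ! i \<bullet> z)^2)"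
    proof (rule sum_mono)
      fix i assume "i \<in> {..<d}"
      then have i: "i < d" by auto
      show "ls' ! i * (qs ! i \<bullet> z)^2 \<le> ls' ! (m - 1) * (qs ! i \<bullet> z)^2"
      proof (cases "i < m - 1")
        case True then show ?thesis using qz by simp
      next
        case False then show ?thesis using mono' i by (intro mult_right_mono) auto
      qed
    qed
    also have "\<dots> = ls' ! (m - 1) * (z \<bullet> z)" using norm_parseval[OF on' z] by (simp add: sum_distrib_left)
    finally show ?thesis .
  qed
  have "z \<bullet> (K *\<^sub>v z) - e * (z \<bullet> z) \<le> z \<bullet> (K' *\<^sub>v z)" using pert z by force
  then have "(ls ! (m - 1) - e) * (z \<bullet> z) \<le> ls' ! (m - 1) * (z \<bullet> z)"
    using zK zK' by (simp add: algebra_simps)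
  then show ?thesis using zpos by simp
qed

lemma core:
  fixes K K' V V' :: "real mat"
  assumes K: "K \<in> carrier_mat d d" "K\<^sup>T = K" and K': "K' \<in> carrier_mat d d" "K'\<^sup>T = K'"
    and pert: "\<forall>x\<in>carrier_vec d. \<bar>x \<bullet> (K' *\<^sub>v x) - x \<bullet> (K *\<^sub>v x)\<bar> \<le> e * (x \<bullet> x)"
    and m0: "0 < m" and md: "m < d"
    and tV: "top_eigvec_matrix m K V" and tV': "top_eigvec_matrix m K' V'"
    and gap: "2 * e < eig_nth K m - eig_nth K (m + 1)"
  shows "Theta V' V \<le> arccos (sqrt (min 1 ((eig_nth K m - eig_nth K (m + 1) - 2 * e)
                                           / (eig_nth K 1 - eig_nth K (m + 1)))))"
proof -
  obtain ps where es: "eigsys d K ps (eigs_desc K)" using eigsys_exists[OF K] by auto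
  obtain qs where es': "eigsys d K' qs (eigs_desc K')" using eigsys_exists[OF K'] by auto
  define ls where "ls = eigs_desc K"
  define ls' where "ls' = eigs_desc K'"
  have mono: "\<And>i j. i \<le> j \<Longrightarrow> j < d \<Longrightarrow> ls ! j \<le> ls ! i" using es unfolding eigsys_def ls_def by auto
  have en: "\<And>j. eig_nth K (j + 1) = ls ! j" unfolding eig_nth_def ls_def by simp
  have en': "\<And>j. eig_nth K' (j + 1) = ls' ! j" unfolding eig_nth_def ls'_def by simp
  have enm: "eig_nth K m = ls ! (m - 1)" using en[of "m - 1"] m0 by simp
  have en1: "eig_nth K 1 = ls ! 0" using en[of 0] by simp
  have enm1: "eig_nth K (m + 1) = ls ! m" using en[of m] by simp
  have V: "V \<in> carrier_mat d m" "V\<^sup>T * V = 1\<^sub>m m" "\<forall>j<m. K *\<^sub>v col V j = ls ! j \<cdot>\<^sub>v col V j"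
    using tV K en unfolding top_eigvec_matrix_def by auto
  have V': "V' \<in> carrier_mat d m" "V'\<^sup>T * V' = 1\<^sub>m m" "\<forall>j<m. K' *\<^sub>v col V' j = ls' ! j \<cdot>\<^sub>v col V' j"
    using tV' K' en' unfolding top_eigvec_matrix_def by auto
  have e0: "0 \<le> e"
  proof -
    have u: "unit_vec d 0 \<in> carrier_vec d" by simp
    have "unit_vec d 0 \<bullet> unit_vec d 0 = (1::real)" using md by (simp add: scalar_prod_right_unit)
    then show ?thesis using pert[rule_format, OF u] by (metis abs_ge_zero mult.right_neutral order_trans)
  qed
  define g where "g = ls ! (m - 1) - ls ! m"
  have g: "2 * e < g" using gap unfolding g_def enm enm1 .
  have gpos: "0 < g" using g e0 by simp
  have weyl: "ls ! (m - 1) - e \<le> ls' ! (m - 1)"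
    using weyl[OF es es' pert m0] md unfolding ls_def ls'_def by auto
  define den where "den = ls ! 0 - ls ! m"
  have den: "g \<le> den" unfolding den_def g_def using mono[of 0 "m - 1"] md by auto
  have denpos: "0 < den" using den gpos by simp
  define c0 where "c0 = (g - 2 * e) / den"
  have c0pos: "0 < c0" unfolding c0_def using g denpos by simp
  have key: "c0 * (x \<bullet> x) \<le> (V\<^sup>T *\<^sub>v (V' *\<^sub>v x)) \<bullet> (V\<^sup>T *\<^sub>v (V' *\<^sub>v x))" if x: "x \<in> carrier_vec m" for x
  proof -
    define w where "w = V' *\<^sub>v x"
    have w: "w \<in> carrier_vec d" unfolding w_def using V' x by auto
    have ww: "w \<bullet> w = x \<bullet> x" unfolding w_def using oncols(3)[OF V'(1,2) x] .
    define al where "al = (V\<^sup>T *\<^sub>v w) \<bullet> (V\<^sup>T *\<^sub>v w)"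
    have al: "al = (\<Sum>i<m. (ps ! i \<bullet> w)^2)" unfolding al_def
      using span_E[OF es V(1,2) md m0 _ _ w] gpos V(3) unfolding ls_def g_def by auto
    have r: "ls' ! (m - 1) * (x \<bullet> x) \<le> w \<bullet> (K' *\<^sub>v w)"
      unfolding w_def using rayleigh_V[OF es' V'(1,2) _ m0 _ x] md V'(3) unfolding ls'_def by auto
    have p: "w \<bullet> (K' *\<^sub>v w) \<le> w \<bullet> (K *\<^sub>v w) + e * (x \<bullet> x)"
    proof -
      have "\<bar>w \<bullet> (K' *\<^sub>v w) - w \<bullet> (K *\<^sub>v w)\<bar> \<le> e * (w \<bullet> w)" using pert w by blast
      then have "w \<bullet> (K' *\<^sub>v w) - w \<bullet> (K *\<^sub>v w) \<le> e * (x \<bullet> x)" using ww abs_le_D1 by simp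
      then show ?thesis by linarith
    qed
    have u: "w \<bullet> (K *\<^sub>v w) \<le> ls ! 0 * al + ls ! m * (x \<bullet> x - al)"
      using upper_C[OF es md w] al ww unfolding ls_def by simp
    have "(ls ! (m - 1) - e) * (x \<bullet> x) \<le> ls ! 0 * al + ls ! m * (x \<bullet> x - al) + e * (x \<bullet> x)"
      using weyl r p u self_dot_nonneg[of x] mult_right_mono[OF weyl, of "x \<bullet> x"] by linarith
    then have "(g - 2 * e) * (x \<bullet> x) \<le> den * al" unfolding g_def den_def by (simp add: algebra_simps)
    then have "(g - 2 * e) * (x \<bullet> x) / den \<le> al" using denpos by (simp add: field_simps)
    then show ?thesis unfolding c0_def al_def w_def by (simp add: field_simps)
  qed
  define M where "M = V'\<^sup>T * V"
  have M: "M \<in> carrier_mat m m" unfolding M_def using V V' by auto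
  have MT: "M\<^sup>T = V\<^sup>T * V'" unfolding M_def using transpose_mult[of "V'\<^sup>T" m d V m] V V' by auto
  have MTx: "M\<^sup>T *\<^sub>v x = V\<^sup>T *\<^sub>v (V' *\<^sub>v x)" if "x \<in> carrier_vec m" for x
    unfolding MT using assoc_mult_mat_vec[of "V\<^sup>T" m d V' m x] V V' that by auto
  have key2: "c0 * (x \<bullet> x) \<le> (M\<^sup>T *\<^sub>v x) \<bullet> (M\<^sup>T *\<^sub>v x)" if "x \<in> carrier_vec m" for x
    using key[OF that] MTx[OF that] by simp
  define MtM where "MtM = M\<^sup>T * M"
  have MtM: "MtM \<in> carrier_mat m m" unfolding MtM_def using M by auto
  have MtMs: "MtM\<^sup>T = MtM" unfolding MtM_def using transpose_mult[of "M\<^sup>T" m m M m] M by auto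
  obtain rs where er: "eigsys m MtM rs (eigs_desc MtM)" using eigsys_exists[OF MtM MtMs] by auto
  define mu where "mu = eigs_desc MtM ! (m - 1)"
  define z where "z = rs ! (m - 1)"
  have z: "z \<in> carrier_vec m" "z \<bullet> z = 1" "MtM *\<^sub>v z = mu \<cdot>\<^sub>v z"
  proof -
    have "ON m rs" "length rs = m" "\<forall>i<m. MtM *\<^sub>v rs ! i = eigs_desc MtM ! i \<cdot>\<^sub>v rs ! i"
      using er unfolding eigsys_def by auto
    then show "z \<in> carrier_vec m" "z \<bullet> z = 1" "MtM *\<^sub>v z = mu \<cdot>\<^sub>v z"
      using m0 ON_carrier[of m rs "m - 1"] ON_dot[of m rs "m - 1" "m - 1"] unfolding z_def mu_def by auto
  qed
  have Mz: "M *\<^sub>v z \<in> carrier_vec m" using M z by auto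
  have MtMz: "MtM *\<^sub>v z = M\<^sup>T *\<^sub>v (M *\<^sub>v z)" unfolding MtM_def using assoc_mult_mat_vec[of "M\<^sup>T" m m M m z] M z by auto
  have mu: "mu = (M *\<^sub>v z) \<bullet> (M *\<^sub>v z)"
  proof -
    have "mu = z \<bullet> (MtM *\<^sub>v z)" using z by (simp add: scalar_prod_smult_right)
    also have "\<dots> = (M\<^sup>T *\<^sub>v (M *\<^sub>v z)) \<bullet> z"
    proof -
      have c: "M\<^sup>T *\<^sub>v (M *\<^sub>v z) \<in> carrier_vec m" using M z by auto
      show ?thesis using MtMz comm_scalar_prod[OF z(1) c] by simp
    qed
    also have "\<dots> = (M *\<^sub>v z) \<bullet> (M *\<^sub>v z)" using transpose_vec_mult_scalar[OF M z(1) Mz] .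
    finally show ?thesis .
  qed
  have mu1: "mu \<le> 1"
  proof -
    have "M *\<^sub>v z = V'\<^sup>T *\<^sub>v (V *\<^sub>v z)" unfolding M_def using assoc_mult_mat_vec[of "V'\<^sup>T" m d V m z] V V' z by auto
    moreover have "V *\<^sub>v z \<in> carrier_vec d" using V z by auto
    ultimately have "mu \<le> (V *\<^sub>v z) \<bullet> (V *\<^sub>v z)" using oncols(5)[OF V'(1,2)] mu by simp
    also have "\<dots> = 1" using oncols(3)[OF V(1,2) z(1)] z by simp
    finally show ?thesis .
  qed
  have mupos: "0 < mu"
  proof (rule ccontr)
    assume "\<not> 0 < mu"
    then have "mu = 0" using mu self_dot_nonneg[of "M *\<^sub>v z"] by simp
    then have "M *\<^sub>v z = 0\<^sub>v m" using self_dot_zero[OF Mz] mu by simp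
    moreover have "z \<noteq> 0\<^sub>v m" using z by auto
    ultimately have "det M = 0" using det_0_iff_vec_prod_zero[OF M] z by auto
    then have "det M\<^sup>T = 0" using det_transpose[OF M] by simp
    moreover have MTc: "M\<^sup>T \<in> carrier_mat m m" using M by auto
    ultimately obtain x where x: "x \<in> carrier_vec m" "x \<noteq> 0\<^sub>v m" "M\<^sup>T *\<^sub>v x = 0\<^sub>v m"
      using det_0_iff_vec_prod_zero[OF MTc] by auto
    have "c0 * (x \<bullet> x) \<le> 0" using key2[OF x(1)] x(3) by simp
    moreover have "0 < c0 * (x \<bullet> x)" using c0pos self_dot_pos[OF x(1,2)] by simp
    ultimately show False by simp
  qed
  have muc0: "c0 \<le> mu"
  proof -
    define y where "y = M *\<^sub>v z"
    have "M\<^sup>T *\<^sub>v y = mu \<cdot>\<^sub>v z" unfolding y_def using MtMz z by simp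
    then have "(M\<^sup>T *\<^sub>v y) \<bullet> (M\<^sup>T *\<^sub>v y) = mu * mu" using z by (simp add: scalar_prod_smult_left scalar_prod_smult_right)
    moreover have "y \<bullet> y = mu" unfolding y_def using mu by simp
    moreover have "y \<in> carrier_vec m" unfolding y_def using Mz .
    ultimately have "c0 * mu \<le> mu * mu" using key2[of y] by simp
    then show ?thesis using mupos by simp
  qed
  define c1 where "c1 = min 1 c0"
  have c1: "0 < c1" "c1 \<le> mu" unfolding c1_def using c0pos muc0 by auto
  have "Theta V' V = arccos (sqrt mu)"
    unfolding Theta_def smallest_sv_def eig_nth_def mu_def MtM_def M_def[symmetric] using M m0 by simp
  also have "\<dots> \<le> arccos (sqrt c1)"
  proof (rule arccos_le_arccos)
    have "0 \<le> sqrt c1" using c1 by simp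
    then show "- 1 \<le> sqrt c1" by linarith
    show "sqrt c1 \<le> sqrt mu" using c1 by simp
    show "sqrt mu \<le> 1" using mu1 by simp
  qed
  also have "c1 = min 1 ((eig_nth K m - eig_nth K (m + 1) - 2 * e) / (eig_nth K 1 - eig_nth K (m + 1)))"
    unfolding c1_def c0_def g_def den_def enm enm1 en1 ..
  finally show ?thesis .
qed

lemma cauchy_schwarz_vec: fixes u x :: "real vec"
  assumes u: "u \<in> carrier_vec d" and x: "x \<in> carrier_vec d"
  shows "(u \<bullet> x)^2 \<le> (u \<bullet> u) * (x \<bullet> x)"
proof (cases "u \<bullet> u = 0")
  case True
  then have "u = 0\<^sub>v d" using self_dot_zero[OF u] by simp
  then show ?thesis using x by simp
next
  case False
  then have uu: "u \<bullet> u > 0" using self_dot_nonneg[of u] by simp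
  define t where "t = (u \<bullet> x) / (u \<bullet> u)"
  have tu: "t \<cdot>\<^sub>v u \<in> carrier_vec d" using u by simp
  have ux: "x \<bullet> u = u \<bullet> x" using comm_scalar_prod[OF x u] .
  have "0 \<le> (x - t \<cdot>\<^sub>v u) \<bullet> (x - t \<cdot>\<^sub>v u)" by (rule self_dot_nonneg)
  also have "(x - t \<cdot>\<^sub>v u) \<bullet> (x - t \<cdot>\<^sub>v u) = x \<bullet> x - 2 * t * (u \<bullet> x) + t * t * (u \<bullet> u)"
  proof -
    have "(x - t \<cdot>\<^sub>v u) \<bullet> (x - t \<cdot>\<^sub>v u) = x \<bullet> (x - t \<cdot>\<^sub>v u) - (t \<cdot>\<^sub>v u) \<bullet> (x - t \<cdot>\<^sub>v u)"
      using minus_scalar_prod_distrib[OF x tu, of "x - t \<cdot>\<^sub>v u"] x u by simp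
    also have "x \<bullet> (x - t \<cdot>\<^sub>v u) = x \<bullet> x - t * (x \<bullet> u)"
      using scalar_prod_minus_distrib[OF x x tu] x u by (simp add: scalar_prod_smult_right)
    also have "(t \<cdot>\<^sub>v u) \<bullet> (x - t \<cdot>\<^sub>v u) = t * (u \<bullet> x) - t * t * (u \<bullet> u)"
      using scalar_prod_minus_distrib[OF tu x tu] x u
      by (simp add: scalar_prod_smult_right scalar_prod_smult_left)
    finally show ?thesis using ux by simp
  qed
  also have "\<dots> = x \<bullet> x - (u \<bullet> x)^2 / (u \<bullet> u)"
    unfolding t_def using uu by (simp add: field_simps power2_eq_square)
  finally have "(u \<bullet> x)^2 / (u \<bullet> u) \<le> x \<bullet> x" by simp
  then show ?thesis using uu by (simp add: field_simps mult.commute)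
qed

lemma quad_pairs: fixes x :: "real vec" and u :: "'p \<Rightarrow> real vec"
  assumes P: "finite P" and u: "\<And>p. p \<in> P \<Longrightarrow> u p \<in> carrier_vec d" and x: "x \<in> carrier_vec d"
  shows "(\<Sum>a<d. x $ a * (\<Sum>b<d. (\<Sum>p\<in>P. u p $ a * u p $ b) * x $ b)) = (\<Sum>p\<in>P. (u p \<bullet> x)^2)"
proof -
  have "(\<Sum>p\<in>P. (u p \<bullet> x)^2) = (\<Sum>p\<in>P. (\<Sum>a<d. u p $ a * x $ a) * (\<Sum>b<d. u p $ b * x $ b))"
    using u x by (intro sum.cong) (auto simp: scalar_prod_def atLeast0LessThan power2_eq_square)
  also have "\<dots> = (\<Sum>p\<in>P. \<Sum>a<d. \<Sum>b<d. (u p $ a * x $ a) * (u p $ b * x $ b))"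
    by (simp add: sum_product)
  also have "\<dots> = (\<Sum>a<d. \<Sum>p\<in>P. \<Sum>b<d. (u p $ a * x $ a) * (u p $ b * x $ b))"
    by (rule sum.swap)
  also have "\<dots> = (\<Sum>a<d. \<Sum>b<d. \<Sum>p\<in>P. (u p $ a * x $ a) * (u p $ b * x $ b))"
    by (rule sum.cong[OF refl], rule sum.swap)
  also have "\<dots> = (\<Sum>a<d. x $ a * (\<Sum>b<d. (\<Sum>p\<in>P. u p $ a * u p $ b) * x $ b))"
    by (intro sum.cong refl, subst sum_distrib_left, intro sum.cong refl, subst sum_distrib_right,
        subst sum_distrib_left, intro sum.cong refl) (simp only: mult_ac)
  finally show ?thesis ..
qed


definition pairs :: "nat \<Rightarrow> (nat \<times> nat) set" where
  "pairs n = Sigma {..<n} (\<lambda>i. {i<..<n})"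

definition uu :: "(real \<Rightarrow> real) \<Rightarrow> real vec list \<Rightarrow> nat \<times> nat \<Rightarrow> real vec" where
  "uu xi S p = gss xi ((1 / sqrt 2) \<cdot>\<^sub>v (S ! snd p - S ! fst p))"

definition ck :: "nat \<Rightarrow> real" where
  "ck n = 2 / (real n * (real n - 1))"

lemma finite_pairs: "finite (pairs n)" unfolding pairs_def by auto

lemma pairs_mem: "p \<in> pairs n \<Longrightarrow> fst p < snd p \<and> snd p < n" unfolding pairs_def by auto

lemma ck_nonneg: "0 \<le> ck n"
  unfolding ck_def by (cases n) auto

lemma gss_carrier: "t \<in> carrier_vec d \<Longrightarrow> gss xi t \<in> carrier_vec d"
  unfolding gss_def by auto

lemma uu_carrier: assumes S: "\<forall>x\<in>set S. x \<in> carrier_vec d" "length S = n" and p: "p \<in> pairs n"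
  shows "uu xi S p \<in> carrier_vec d"
proof -
  have "S ! fst p \<in> carrier_vec d" "S ! snd p \<in> carrier_vec d" using pairs_mem[OF p] S by auto
  then show ?thesis unfolding uu_def by (intro gss_carrier) auto
qed

lemma K_hat_carrier: "K_hat d xi S \<in> carrier_mat d d"
  unfolding K_hat_def Let_def by auto

lemma K_hat_sym: "(K_hat d xi S)\<^sup>T = K_hat d xi S"
  unfolding K_hat_def Let_def by (intro eq_matI) (auto simp: mult.commute)

lemma sum_pairs: "(\<Sum>i<n. \<Sum>j\<in>{i<..<n}. g i j) = (\<Sum>p\<in>pairs n. g (fst p) (snd p))"
  unfolding pairs_def by (subst sum.Sigma) (auto simp: split_beta)

lemma K_hat_entry: assumes "a < d" "b < d" "length S = n"
  shows "K_hat d xi S $$ (a, b) = ck n * (\<Sum>p\<in>pairs n. uu xi S p $ a * uu xi S p $ b)"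
  using assms unfolding K_hat_def Let_def ck_def uu_def
  by (simp add: sum_pairs[where n=n and g="\<lambda>i j. gss xi ((1 / sqrt 2) \<cdot>\<^sub>v (S ! j - S ! i)) $ a *
     gss xi ((1 / sqrt 2) \<cdot>\<^sub>v (S ! j - S ! i)) $ b"])

lemma K_quad: fixes x :: "real vec"
  assumes S: "\<forall>x\<in>set S. x \<in> carrier_vec d" "length S = n" and x: "x \<in> carrier_vec d"
  shows "x \<bullet> (K_hat d xi S *\<^sub>v x) = ck n * (\<Sum>p\<in>pairs n. (uu xi S p \<bullet> x)^2)"
proof -
  have "x \<bullet> (K_hat d xi S *\<^sub>v x) = (\<Sum>a<d. x $ a * (\<Sum>b<d. K_hat d xi S $$ (a, b) * x $ b))"
    using x K_hat_carrier[of d xi S]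
    by (auto simp: scalar_prod_def atLeast0LessThan row_def intro!: sum.cong)
  also have "\<dots> = (\<Sum>a<d. x $ a * (\<Sum>b<d. (ck n * (\<Sum>p\<in>pairs n. uu xi S p $ a * uu xi S p $ b)) * x $ b))"
    using K_hat_entry S by (intro sum.cong refl) auto
  also have "\<dots> = ck n * (\<Sum>a<d. x $ a * (\<Sum>b<d. (\<Sum>p\<in>pairs n. uu xi S p $ a * uu xi S p $ b) * x $ b))"
    by (simp add: sum_distrib_left mult_ac)
  also have "\<dots> = ck n * (\<Sum>p\<in>pairs n. (uu xi S p \<bullet> x)^2)"
    using quad_pairs[OF finite_pairs uu_carrier[OF S] x] by simp
  finally show ?thesis .
qed

lemma vnorm_smult: "vnorm (c \<cdot>\<^sub>v t) = \<bar>c\<bar> * vnorm t"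
  unfolding vnorm_def by (simp add: scalar_prod_smult_left scalar_prod_smult_right real_sqrt_mult
      flip: power2_eq_square mult.assoc)

lemma vnorm_nonneg: "0 \<le> vnorm t" unfolding vnorm_def using self_dot_nonneg[of t] by simp

lemma vnorm_sq: "(vnorm t)^2 = t \<bullet> t"
  unfolding vnorm_def using self_dot_nonneg[of t] by simp

lemma gss_vnorm: assumes "vnorm t \<noteq> 0" shows "vnorm (gss xi t) = \<bar>xi (vnorm t)\<bar>"
proof -
  have "vnorm (gss xi t) = \<bar>xi (vnorm t) / vnorm t\<bar> * vnorm t"
    unfolding gss_def using assms by (simp add: vnorm_smult)
  also have "\<dots> = \<bar>xi (vnorm t)\<bar>" using assms vnorm_nonneg[of t] by (simp add: abs_div)
  finally show ?thesis .
qed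

lemma G_facts:
  assumes xi_pos: "\<And>r. r > 0 \<Longrightarrow> xi r > 0" and xi_bdd: "bdd_above (xi ` {0<..})" and d: "0 < d"
  shows "bdd_above ((\<lambda>t. vnorm (gss xi t)) ` carrier_vec d)"
    "\<And>t. t \<in> carrier_vec d \<Longrightarrow> vnorm (gss xi t) \<le> gss_sup_norm d xi"
    "0 < gss_sup_norm d xi"
proof -
  obtain B where B: "\<And>r. r > 0 \<Longrightarrow> xi r \<le> B" using xi_bdd unfolding bdd_above_def by auto
  have "vnorm (gss xi t) \<le> max 0 B" for t
  proof (cases "vnorm t = 0")
    case True
    then have "gss xi t = 0\<^sub>v (dim_vec t)" unfolding gss_def by simp
    then have "vnorm (gss xi t) = 0" unfolding vnorm_def by simp
    then show ?thesis by simp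
  next
    case False
    then have pos: "vnorm t > 0" using vnorm_nonneg[of t] by simp
    have "vnorm (gss xi t) = \<bar>xi (vnorm t)\<bar>" using gss_vnorm[OF False] .
    also have "\<dots> = xi (vnorm t)" using xi_pos[OF pos] by simp
    also have "\<dots> \<le> B" using B[OF pos] .
    finally show ?thesis by simp
  qed
  then show bdd: "bdd_above ((\<lambda>t. vnorm (gss xi t)) ` carrier_vec d)"
    unfolding bdd_above_def by blast
  show up: "\<And>t. t \<in> carrier_vec d \<Longrightarrow> vnorm (gss xi t) \<le> gss_sup_norm d xi"
    unfolding gss_sup_norm_def by (rule cSUP_upper[OF _ bdd])
  define t :: "real vec" where "t = unit_vec d 0"
  have t: "t \<in> carrier_vec d" unfolding t_def by simp
  have "t \<bullet> t = 1" unfolding t_def using d by (simp add: scalar_prod_right_unit)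
  then have vt: "vnorm t = 1" unfolding vnorm_def by simp
  have "0 < xi 1" using xi_pos by simp
  also have "xi 1 = vnorm (gss xi t)" using gss_vnorm[of t xi] vt xi_pos[of 1] by simp
  also have "\<dots> \<le> gss_sup_norm d xi" using up[OF t] .
  finally show "0 < gss_sup_norm d xi" .
qed

lemma dot_bound: fixes u x :: "real vec"
  assumes u: "u \<in> carrier_vec d" and uG: "vnorm u \<le> G" and x: "x \<in> carrier_vec d"
  shows "(u \<bullet> x)^2 \<le> G^2 * (x \<bullet> x)"
proof -
  have "(u \<bullet> x)^2 \<le> (u \<bullet> u) * (x \<bullet> x)" by (rule cauchy_schwarz_vec[OF u x])
  also have "u \<bullet> u = (vnorm u)^2" using vnorm_sq[of u] by simp
  also have "(vnorm u)^2 \<le> G^2" using uG vnorm_nonneg[of u] by (intro power_mono) auto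
  then have "(vnorm u)^2 * (x \<bullet> x) \<le> G^2 * (x \<bullet> x)" using self_dot_nonneg[of x] by (intro mult_right_mono)
  finally show ?thesis .
qed

lemma uu_bound:
  assumes S: "\<forall>x\<in>set S. x \<in> carrier_vec d" "length S = n" and p: "p \<in> pairs n"
    and G: "\<And>t. t \<in> carrier_vec d \<Longrightarrow> vnorm (gss xi t) \<le> G" and x: "x \<in> carrier_vec d"
  shows "(uu xi S p \<bullet> x)^2 \<le> G^2 * (x \<bullet> x)"
proof -
  have "S ! fst p \<in> carrier_vec d" "S ! snd p \<in> carrier_vec d" using pairs_mem[OF p] S by auto
  then have "(1 / sqrt 2) \<cdot>\<^sub>v (S ! snd p - S ! fst p) \<in> carrier_vec d" by auto
  then have "vnorm (uu xi S p) \<le> G" unfolding uu_def by (rule G)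
  then show ?thesis using dot_bound uu_carrier[OF S p] x by blast
qed

lemma card_pairs: "card (pairs n) \<le> n * n"
proof -
  have "pairs n \<subseteq> {..<n} \<times> {..<n}" unfolding pairs_def by auto
  then have "card (pairs n) \<le> card ({..<n} \<times> {..<n})" by (intro card_mono) auto
  then show ?thesis by (simp add: card_cartesian_product)
qed

lemma ck_card: "ck n * real (n * n) \<le> 4"
proof (cases "n < 2")
  case True
  then have "n = 0 \<or> n = 1" by auto
  then show ?thesis unfolding ck_def by auto
next
  case False
  then have n: "real n \<ge> 2" by simp
  have "ck n * real (n * n) = 2 * real n / (real n - 1)" unfolding ck_def using n
    by (simp add: field_simps)
  also have "\<dots> \<le> 4" using n by (simp add: field_simps)
  finally show ?thesis .
qed

lemma K_bounds:
  assumes S: "\<forall>x\<in>set S. x \<in> carrier_vec d" "length S = n"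
    and G: "\<And>t. t \<in> carrier_vec d \<Longrightarrow> vnorm (gss xi t) \<le> G" and x: "x \<in> carrier_vec d"
  shows "0 \<le> x \<bullet> (K_hat d xi S *\<^sub>v x)" "x \<bullet> (K_hat d xi S *\<^sub>v x) \<le> 4 * G^2 * (x \<bullet> x)"
proof -
  have q: "x \<bullet> (K_hat d xi S *\<^sub>v x) = ck n * (\<Sum>p\<in>pairs n. (uu xi S p \<bullet> x)^2)" using K_quad[OF S x] .
  show "0 \<le> x \<bullet> (K_hat d xi S *\<^sub>v x)" unfolding q using ck_nonneg by (intro mult_nonneg_nonneg sum_nonneg) auto
  have "(\<Sum>p\<in>pairs n. (uu xi S p \<bullet> x)^2) \<le> (\<Sum>p\<in>pairs n. G^2 * (x \<bullet> x))"
    using uu_bound[OF S _ G x] by (intro sum_mono) auto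
  also have "\<dots> = real (card (pairs n)) * (G^2 * (x \<bullet> x))" by simp
  also have "\<dots> \<le> real (n * n) * (G^2 * (x \<bullet> x))"
  proof -
    have "real (card (pairs n)) \<le> real (n * n)" using card_pairs[of n] by (simp only: of_nat_le_iff)
    then show ?thesis using self_dot_nonneg[of x] by (intro mult_right_mono) auto
  qed
  finally have "x \<bullet> (K_hat d xi S *\<^sub>v x) \<le> ck n * (real (n * n) * (G^2 * (x \<bullet> x)))"
    unfolding q using ck_nonneg by (intro mult_left_mono) auto
  also have "\<dots> = (ck n * real (n * n)) * (G^2 * (x \<bullet> x))" by simp
  also have "\<dots> \<le> 4 * (G^2 * (x \<bullet> x))" using ck_card[of n] self_dot_nonneg[of x]
    by (intro mult_right_mono) auto
  finally show "x \<bullet> (K_hat d xi S *\<^sub>v x) \<le> 4 * G^2 * (x \<bullet> x)" by simp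
qed

lemma K_pert:
  assumes S: "\<forall>x\<in>set S. x \<in> carrier_vec d" "length S = n"
    and S': "\<forall>x\<in>set S'. x \<in> carrier_vec d" "length S' = n"
    and same: "\<And>i. i < n - r \<Longrightarrow> S' ! i = S ! i"
    and G: "\<And>t. t \<in> carrier_vec d \<Longrightarrow> vnorm (gss xi t) \<le> G" and x: "x \<in> carrier_vec d"
  shows "\<bar>x \<bullet> (K_hat d xi S' *\<^sub>v x) - x \<bullet> (K_hat d xi S *\<^sub>v x)\<bar> \<le> ck n * real (n * r) * G^2 * (x \<bullet> x)"
proof -
  define f where "f = (\<lambda>p. (uu xi S p \<bullet> x)^2)"
  define f' where "f' = (\<lambda>p. (uu xi S' p \<bullet> x)^2)"
  define Q where "Q = G^2 * (x \<bullet> x)"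
  have Q: "0 \<le> Q" unfolding Q_def using self_dot_nonneg[of x] by simp
  have diff: "x \<bullet> (K_hat d xi S' *\<^sub>v x) - x \<bullet> (K_hat d xi S *\<^sub>v x) = ck n * (\<Sum>p\<in>pairs n. f' p - f p)"
    unfolding K_quad[OF S' x] K_quad[OF S x] f_def f'_def by (simp add: sum_subtractf right_diff_distrib)
  have tm: "\<bar>f' p - f p\<bar> \<le> (if n - r \<le> snd p then Q else 0)" if p: "p \<in> pairs n" for p
  proof (cases "n - r \<le> snd p")
    case True
    have "0 \<le> f p" "f p \<le> Q" "0 \<le> f' p" "f' p \<le> Q"
      unfolding f_def f'_def Q_def using uu_bound[OF S p G x] uu_bound[OF S' p G x] by auto
    then show ?thesis using True by auto
  next
    case False
    then have "fst p < n - r" "snd p < n - r" using pairs_mem[OF p] by auto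
    then have "uu xi S' p = uu xi S p" unfolding uu_def using same by simp
    then show ?thesis using False unfolding f_def f'_def by simp
  qed
  have "\<bar>\<Sum>p\<in>pairs n. f' p - f p\<bar> \<le> (\<Sum>p\<in>pairs n. \<bar>f' p - f p\<bar>)" by (rule sum_abs)
  also have "\<dots> \<le> (\<Sum>p\<in>pairs n. if n - r \<le> snd p then Q else 0)" using tm by (intro sum_mono) auto
  also have "\<dots> = (\<Sum>p\<in>{p\<in>pairs n. n - r \<le> snd p}. Q)"
    using sum.inter_filter[OF finite_pairs[of n], where g="\<lambda>_. Q" and P="\<lambda>p. n - r \<le> snd p"] by simp
  also have "\<dots> = real (card {p\<in>pairs n. n - r \<le> snd p}) * Q" by simp
  also have "\<dots> \<le> real (n * r) * Q"
  proof -
    have "{p\<in>pairs n. n - r \<le> snd p} \<subseteq> {..<n} \<times> {n - r..<n}" unfolding pairs_def by auto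
    then have "card {p\<in>pairs n. n - r \<le> snd p} \<le> card ({..<n} \<times> {n - r..<n})" by (intro card_mono) auto
    also have "\<dots> \<le> n * r" by (simp add: card_cartesian_product) linarith
    finally have "real (card {p\<in>pairs n. n - r \<le> snd p}) \<le> real (n * r)" by (simp only: of_nat_le_iff)
    then show ?thesis using Q by (intro mult_right_mono) auto
  qed
  finally have "\<bar>\<Sum>p\<in>pairs n. f' p - f p\<bar> \<le> real (n * r) * Q" .
  then have "ck n * \<bar>\<Sum>p\<in>pairs n. f' p - f p\<bar> \<le> ck n * (real (n * r) * Q)"
    using ck_nonneg by (intro mult_left_mono) auto
  then show ?thesis unfolding diff Q_def using ck_nonneg by (simp add: abs_mult mult_ac)
qed

lemma eig_quad: assumes es: "eigsys d K ps ls" and i: "i < d"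
  shows "ls ! i = ps ! i \<bullet> (K *\<^sub>v ps ! i)" "ps ! i \<in> carrier_vec d" "ps ! i \<bullet> ps ! i = 1"
proof -
  have on: "ON d ps" "length ps = d" and ev: "K *\<^sub>v ps ! i = ls ! i \<cdot>\<^sub>v ps ! i"
    using es i unfolding eigsys_def by auto
  show pc: "ps ! i \<in> carrier_vec d" using ON_carrier[OF on(1)] on(2) i by auto
  show pp: "ps ! i \<bullet> ps ! i = 1" using ON_dot[OF on(1)] on(2) i by auto
  show "ls ! i = ps ! i \<bullet> (K *\<^sub>v ps ! i)" using ev pc pp by (simp add: scalar_prod_smult_right)
qed

lemma contaminated_props: assumes "S' \<in> contaminated d S r" "length S = n" "r \<le> n"
  "\<forall>x\<in>set S. x \<in> carrier_vec d"
  shows "length S' = n" "\<forall>x\<in>set S'. x \<in> carrier_vec d" "\<And>i. i < n - r \<Longrightarrow> S' ! i = S ! i"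
proof -
  obtain ys where ys: "S' = take (length S - r) S @ ys" "length ys = r" "\<forall>y\<in>set ys. y \<in> carrier_vec d"
    using assms(1) unfolding contaminated_def by auto
  show "length S' = n" using ys assms by auto
  show "\<forall>x\<in>set S'. x \<in> carrier_vec d" using ys assms(4) by (auto dest: in_set_takeD)
  show "\<And>i. i < n - r \<Longrightarrow> S' ! i = S ! i" using ys assms by (auto simp: nth_append)
qed

lemma contaminated_ne: "contaminated d S r \<noteq> {}"
  unfolding contaminated_def by (auto intro!: exI[of _ "replicate r (0\<^sub>v d)"])

theorem theorem10:
  fixes d m n :: nat and xi :: "real \<Rightarrow> real" and S :: "real vec list"
    and V :: "real vec list \<Rightarrow> real mat"
  assumes xi_pos: "\<And>r. r > 0 \<Longrightarrow> xi r > 0"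
    and xi_bdd: "bdd_above (xi ` {0<..})"
    and m: "1 \<le> m" "m < d"
    and S: "length S = n" "\<forall>x\<in>set S. x \<in> carrier_vec d"
    and V: "\<And>S'. length S' = n \<Longrightarrow> (\<forall>x\<in>set S'. x \<in> carrier_vec d) \<Longrightarrow>
              top_eigvec_matrix m (K_hat d xi S') (V S')"
  shows "bp d V S \<ge> (eig_nth (K_hat d xi S) m - eig_nth (K_hat d xi S) (m + 1))
                      / (8 * (gss_sup_norm d xi)\<^sup>2)"
proof -
  define K where "K = K_hat d xi S"
  define G where "G = gss_sup_norm d xi"
  have d0: "0 < d" using m by simp
  have Gup: "\<And>t. t \<in> carrier_vec d \<Longrightarrow> vnorm (gss xi t) \<le> G"
    using G_facts[OF xi_pos xi_bdd d0] unfolding G_def by auto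
  have Gpos: "0 < G" using G_facts[OF xi_pos xi_bdd d0] unfolding G_def by auto
  have KC: "K \<in> carrier_mat d d" "K\<^sup>T = K" unfolding K_def by (auto simp: K_hat_carrier K_hat_sym)
  obtain ps where es: "eigsys d K ps (eigs_desc K)" using eigsys_exists[OF KC] by auto
  define ls where "ls = eigs_desc K"
  have mono: "\<And>i j. i \<le> j \<Longrightarrow> j < d \<Longrightarrow> ls ! j \<le> ls ! i" using es unfolding eigsys_def ls_def by auto
  have en: "\<And>j. eig_nth K (j + 1) = ls ! j" unfolding eig_nth_def ls_def by simp
  have enm: "eig_nth K m = ls ! (m - 1)" using en[of "m - 1"] m by simp
  have en1: "eig_nth K 1 = ls ! 0" using en[of 0] by simp
  have enm1: "eig_nth K (m + 1) = ls ! m" using en[of m] by simp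
  have lsb: "0 \<le> ls ! i \<and> ls ! i \<le> 4 * G^2" if i: "i < d" for i
  proof -
    note eq = eig_quad[OF es[folded ls_def] i]
    show ?thesis using K_bounds[OF S(2) S(1) Gup eq(2)] eq unfolding K_def by simp
  qed
  define gap where "gap = ls ! (m - 1) - ls ! m"
  have goal_eq: "(eig_nth (K_hat d xi S) m - eig_nth (K_hat d xi S) (m + 1)) / (8 * (gss_sup_norm d xi)\<^sup>2)
      = gap / (8 * G^2)" unfolding gap_def G_def K_def[symmetric] enm enm1 ..
  have bp0: "0 \<le> bp d V S" unfolding bp_def Let_def by auto
  show ?thesis
  proof (cases "gap \<le> 0")
    case True
    then have "gap / (8 * G^2) \<le> 0" using Gpos by (intro divide_nonpos_pos) auto
    then show ?thesis using bp0 goal_eq by simp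
  next
    case False
    then have gpos: "0 < gap" by simp
    have n2: "2 \<le> n"
    proof (rule ccontr)
      assume "\<not> 2 \<le> n"
      then have ck0: "ck n = 0" unfolding ck_def by (cases n) auto
      have "ls ! i = 0" if "i < d" for i
        using eig_quad[OF es[folded ls_def] that] K_quad[OF S(2) S(1)] ck0 unfolding K_def by simp
      then have "gap = 0" unfolding gap_def using m by simp
      then show False using gpos by simp
    qed
    have gle: "gap \<le> 4 * G^2"
    proof -
      have "m - 1 < d" using m by simp
      then show ?thesis unfolding gap_def using lsb[of "m - 1"] lsb[of m] m by linarith
    qed
    have rhs1: "gap / (8 * G^2) \<le> 1"
    proof -
      have "0 < G^2" using Gpos by simp
      then have "gap \<le> 8 * G^2" using gle by linarith
      then show ?thesis using Gpos by (simp add: field_simps)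
    qed
    define R where "R = {r \<in> {1..n}. (SUP S'\<in>contaminated d S r. Theta (V S') (V S)) = pi / 2}"
    have bpR: "bp d V S = (if R = {} then 1 else real (Min R) / real n)"
      unfolding bp_def Let_def R_def S(1) ..
    show ?thesis
    proof (cases "R = {}")
      case True then show ?thesis using bpR rhs1 goal_eq by simp
    next
      case False
      define r0 where "r0 = Min R"
      have finR: "finite R" unfolding R_def by auto
      have r0R: "r0 \<in> R" unfolding r0_def using Min_in[OF finR False] .
      then have r0: "1 \<le> r0" "r0 \<le> n" and sup: "(SUP S'\<in>contaminated d S r0. Theta (V S') (V S)) = pi / 2"
        unfolding R_def by auto
      have "gap / (8 * G^2) \<le> real r0 / real n"
      proof (rule ccontr)
        assume "\<not> ?thesis"
        then have lt: "real r0 / real n < gap / (8 * G^2)" by simp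
        define e where "e = ck n * real (n * r0) * G^2"
        have nr: "real n \<ge> 2" using n2 by simp
        have G2: "0 < G^2" using Gpos by simp
        have a: "8 * real r0 * G^2 < gap * real n" using lt nr G2 by (simp add: field_simps)
        have b: "e = 2 * real r0 * G^2 / (real n - 1)" unfolding e_def ck_def using nr
          by (simp add: field_simps)
        have c: "4 * real r0 * G^2 / (real n - 1) \<le> 8 * real r0 * G^2 / real n"
          using nr G2 r0 by (simp add: field_simps)
        have dd: "8 * real r0 * G^2 / real n < gap" using a nr by (simp add: field_simps)
        have "2 * e = 4 * real r0 * G^2 / (real n - 1)" using b by simp
        then have e2: "2 * e < gap" using c dd by linarith
        have e0: "0 \<le> e" unfolding e_def using ck_nonneg by simp
        define B0 where "B0 = arccos (sqrt (min 1 ((eig_nth K m - eig_nth K (m + 1) - 2 * e)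
                                           / (eig_nth K 1 - eig_nth K (m + 1)))))"
        have bound: "Theta (V S') (V S) \<le> B0" if S': "S' \<in> contaminated d S r0" for S'
        proof -
          note cp = contaminated_props[OF S' S(1) r0(2) S(2)]
          define K' where "K' = K_hat d xi S'"
          have K'C: "K' \<in> carrier_mat d d" "K'\<^sup>T = K'" unfolding K'_def by (auto simp: K_hat_carrier K_hat_sym)
          have pert: "\<forall>x\<in>carrier_vec d. \<bar>x \<bullet> (K' *\<^sub>v x) - x \<bullet> (K *\<^sub>v x)\<bar> \<le> e * (x \<bullet> x)"
            using K_pert[OF S(2) S(1) cp(2) cp(1) cp(3) Gup] unfolding K_def K'_def e_def by auto
          have tV: "top_eigvec_matrix m K (V S)" unfolding K_def using V[OF S] .
          have tV': "top_eigvec_matrix m K' (V S')" unfolding K'_def using V[OF cp(1) cp(2)] .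
          have "2 * e < eig_nth K m - eig_nth K (m + 1)" using e2 unfolding gap_def enm enm1 .
          from core[OF KC K'C pert _ m(2) tV tV' this] m show ?thesis unfolding B0_def by simp
        qed
        have "(SUP S'\<in>contaminated d S r0. Theta (V S') (V S)) \<le> B0"
          using bound contaminated_ne by (intro cSUP_least) auto
        moreover have "B0 < pi / 2"
        proof -
          define c where "c = min 1 ((eig_nth K m - eig_nth K (m + 1) - 2 * e) / (eig_nth K 1 - eig_nth K (m + 1)))"
          have den: "gap \<le> eig_nth K 1 - eig_nth K (m + 1)" unfolding en1 enm1 gap_def
            using mono[of 0 "m - 1"] m by simp
          have "0 < (eig_nth K m - eig_nth K (m + 1) - 2 * e) / (eig_nth K 1 - eig_nth K (m + 1))"
            using e2 den gpos unfolding gap_def enm enm1 by (intro divide_pos_pos) auto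
          then have c: "0 < c" "c \<le> 1" unfolding c_def by auto
          have "arccos (sqrt c) < arccos 0"
            using c by (intro arccos_less_arccos) auto
          then show ?thesis unfolding B0_def c_def[symmetric] by simp
        qed
        ultimately show False using sup by simp
      qed
      then show ?thesis using bpR False goal_eq unfolding r0_def by simp
    qed
  qed
qed

end
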